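(* Let $K\ge 1$ and let $\mathcal{P}_1,\dots,\mathcal{P}_K$ be distributions on a feature space. Suppose the generalized label shift model holds, in the sense that for each class $k\in\{1,\dots,K\}$ the features of all samples whose (true) label is $k$ — training samples of class $k$ as well as test samples whose unobserved label is $k$ — are i.i.d. draws from $\mathcal{P}_k$ (test samples may also come from an outlier component whose label is not in $\{1,\dots,K\}$). Let $\alpha\in(0,1)$, $\gamma\ge 0$, and let $\tilde B\ge 1$ be any fixed integer. Let $\hat C_i(\cdot)$, $i\in\mathcal{I}_{te}$, be the prediction sets produced by the CSForest procedure described in the context. Then $$\mathbb{P}\left[k\in \hat C_i(X)\,\middle|\, Y=k\right]\ \ge\ 1-2\alpha\qquad\text{for all } i\in\mathcal{I}_{te}\text{ and all } k=1,\dots,K,$$ where $(X,Y)$ denotes the feature and true label of test sample $i$, and the probability is over the data and the internal randomness of the procedure.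
   Context: Data: a labeled training set $\{(x_i,y_i): i\in\mathcal{I}_{tr}\}$ with $y_i\in\{1,\dots,K\}$, $|\mathcal{I}_{tr}|=n$, and an unlabeled test set $\{x_i: i\in\mathcal{I}_{te}\}$, $|\mathcal{I}_{te}|=m$. Let $\mathcal{I}_{tr,k}$ be the training samples of class $k$, with $n_k=|\mathcal{I}_{tr,k}|$. CSForest procedure (inputs: the data, $\gamma$, $\tilde B$, $\alpha$). For each $k=1,\dots,K$: (1) Draw $B\sim\mathrm{Binomial}\big(\tilde B,(1-\tfrac{1}{n_k+1})^{n_k}\big)$. (2) For $b=1,\dots,B$: let $\mathcal{I}^b_{tr,k}$ be a bootstrap sample (sampling with replacement, same size) of $\mathcal{I}_{tr,k}$, let $\mathcal{I}^b_{te}$ be a bootstrap sample of $\mathcal{I}_{te}$, and let $\tilde{\mathcal{I}}_{other}$ be a bootstrap sample of size $\min(\lceil m\gamma\rceil, n-n_k)$ from the training samples not of class $k$. Fit a single-tree random forest classifier $\hat f^b$ on $\mathcal{I}^b_{tr,k}\cup\mathcal{I}^b_{te}\cup\tilde{\mathcal{I}}_{other}$ that separates the different labeled training classes and the test samples (the test samples forming their own class); let $\hat f^b_k(x)$ be its estimated score (probability) for class $k$ at $x$. (3) For each pair $i\in\mathcal{I}_{te}$, $i'\in\mathcal{I}_{tr,k}$, let $\mathcal{B}_{ii'}=\{b: i\notin\mathcal{I}^b_{te},\ i'\notin\mathcal{I}^b_{tr,k}\}$ and $\hat f^{ii'}(x)=\frac{1}{|\mathcal{B}_{ii'}|}\sum_{b\in\mathcal{B}_{ii'}}\hat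 f^b_k(x)$. Then for each test sample $i\in\mathcal{I}_{te}$ and each $k$, define the calibrated score $$\hat s_{ik}=\frac{1+\sum_{i'\in\mathcal{I}_{tr,k}}\mathbb{1}\{\hat f^{ii'}(x_i)\ge \hat f^{ii'}(x_{i'})\}}{n_k+1},$$ and the prediction set $\hat C_i(x_i)=\{k\in\{1,\dots,K\}: \hat s_{ik}\ge\alpha\}$. *)

theory Defs
  imports "HOL-Probability.Probability"
begin

text \<open>Training samples are indexed by 0..<n (features xtr j, labels ytr j),
test samples by 0..<m (features xte i). Classes are 1..K. In the fitted classifier a
training sample of class y carries the label Some y, a test sample carries None
(the test samples form their own class).\<close>

definition class_idx :: "nat \<Rightarrow> (nat \<Rightarrow> nat) \<Rightarrow> nat \<Rightarrow> nat set" where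
  "class_idx n ytr k = {j. j < n \<and> ytr j = k}"

definition other_idx :: "nat \<Rightarrow> (nat \<Rightarrow> nat) \<Rightarrow> nat \<Rightarrow> nat set" where
  "other_idx n ytr k = {j. j < n \<and> ytr j \<noteq> k}"

text \<open>size of the bootstrap sample of the other classes: min(ceil(m gamma), n - n_k)\<close>
definition other_size :: "nat \<Rightarrow> nat \<Rightarrow> real \<Rightarrow> (nat \<Rightarrow> nat) \<Rightarrow> nat \<Rightarrow> nat" where
  "other_size n m \<gamma> ytr k = min (nat \<lceil>real m * \<gamma>\<rceil>) (n - card (class_idx n ytr k))"

text \<open>Internal discrete randomness for class k: the number of trees B and, for each tree
b < B, the three bootstrap samples, given as maps (b, position) \<mapsto> sample index.\<close>
type_synonym bags = "nat \<times> (nat \<Rightarrow> nat \<Rightarrow> nat) \<times> (nat \<Rightarrow> nat \<Rightarrow> nat) \<times> (nat \<Rightarrow> nat \<Rightarrow> nat)"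

definition class_rand :: "nat \<Rightarrow> nat \<Rightarrow> real \<Rightarrow> (nat \<Rightarrow> nat) \<Rightarrow> nat \<Rightarrow> nat \<Rightarrow> bags pmf" where
  "class_rand n m \<gamma> ytr Bt k =
     (let nk = card (class_idx n ytr k); so = other_size n m \<gamma> ytr k in
      do { B \<leftarrow> binomial_pmf Bt ((1 - 1 / (real nk + 1)) ^ nk);
           tb \<leftarrow> Pi_pmf {..<B} undefined
                   (\<lambda>b. Pi_pmf {..<nk} undefined (\<lambda>_. pmf_of_set (class_idx n ytr k)));
           eb \<leftarrow> Pi_pmf {..<B} undefined
                   (\<lambda>b. Pi_pmf {..<m} undefined (\<lambda>_. pmf_of_set {..<m}));
           ob \<leftarrow> Pi_pmf {..<B} undefined
                   (\<lambda>b. Pi_pmf {..<so} undefined (\<lambda>_. pmf_of_set (other_idx n ytr k)));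
           return_pmf (B, tb, eb, ob) })"

definition internal_rand :: "nat \<Rightarrow> nat \<Rightarrow> nat \<Rightarrow> real \<Rightarrow> (nat \<Rightarrow> nat) \<Rightarrow> nat \<Rightarrow> (nat \<Rightarrow> bags) pmf" where
  "internal_rand K n m \<gamma> ytr Bt = Pi_pmf {1..K} undefined (\<lambda>k. class_rand n m \<gamma> ytr Bt k)"

definition fit_data ::
  "(nat \<Rightarrow> 'x) \<Rightarrow> (nat \<Rightarrow> 'x) \<Rightarrow> (nat \<Rightarrow> nat) \<Rightarrow> nat \<Rightarrow> nat \<Rightarrow> nat \<Rightarrow> nat
   \<Rightarrow> (nat \<Rightarrow> nat \<Rightarrow> nat) \<Rightarrow> (nat \<Rightarrow> nat \<Rightarrow> nat) \<Rightarrow> (nat \<Rightarrow> nat \<Rightarrow> nat) \<Rightarrow> nat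
   \<Rightarrow> ('x \<times> nat option) multiset" where
  "fit_data xtr xte ytr nk m so k tb eb ob b =
     mset (map (\<lambda>p. (xtr (tb b p), Some k)) [0..<nk])
   + mset (map (\<lambda>p. (xte (eb b p), None)) [0..<m])
   + mset (map (\<lambda>p. (xtr (ob b p), Some (ytr (ob b p)))) [0..<so])"

text \<open>The randomised single-tree
classifier is abstracted as fit D s c x: the score for class c at x of the tree fitted on
the multiset D with independent internal randomness (seed) s. An empty average
(B_ii' empty) is 0 by the HOL convention x / 0 = 0.\<close>
definition cs_score ::
  "(('x \<times> nat option) multiset \<Rightarrow> 's \<Rightarrow> nat \<Rightarrow> 'x \<Rightarrow> real) \<Rightarrow> nat \<Rightarrow> nat \<Rightarrow> real
   \<Rightarrow> (nat \<Rightarrow> nat) \<Rightarrow> (nat \<Rightarrow> 'x) \<Rightarrow> (nat \<Rightarrow> 'x) \<Rightarrow> (nat \<Rightarrow> bags) \<Rightarrow> (nat \<times> nat \<Rightarrow> 's)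
   \<Rightarrow> nat \<Rightarrow> nat \<Rightarrow> real" where
  "cs_score fit n m \<gamma> ytr xtr xte r seed i k =
     (let nk = card (class_idx n ytr k); so = other_size n m \<gamma> ytr k;
          (B, tb, eb, ob) = r k;
          f = (\<lambda>b. fit (fit_data xtr xte ytr nk m so k tb eb ob b) (seed (k, b)) k);
          Bii = (\<lambda>i'. {b. b < B \<and> i \<notin> eb b ` {..<m} \<and> i' \<notin> tb b ` {..<nk}});
          fhat = (\<lambda>i' x. (\<Sum>b\<in>Bii i'. f b x) / real (card (Bii i')))
      in (1 + real (card {i' \<in> class_idx n ytr k. fhat i' (xte i) \<ge> fhat i' (xtr i')}))
           / (real nk + 1))"

definition cs_set ::
  "(('x \<times> nat option) multiset \<Rightarrow> 's \<Rightarrow> nat \<Rightarrow> 'x \<Rightarrow> real) \<Rightarrow> nat \<Rightarrow> nat \<Rightarrow> nat \<Rightarrow> real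
   \<Rightarrow> real \<Rightarrow> (nat \<Rightarrow> nat) \<Rightarrow> (nat \<Rightarrow> 'x) \<Rightarrow> (nat \<Rightarrow> 'x) \<Rightarrow> (nat \<Rightarrow> bags) \<Rightarrow> (nat \<times> nat \<Rightarrow> 's)
   \<Rightarrow> nat \<Rightarrow> nat set" where
  "cs_set fit K n m \<gamma> \<alpha> ytr xtr xte r seed i =
     {k \<in> {1..K}. cs_score fit n m \<gamma> ytr xtr xte r seed i k \<ge> \<alpha>}"

end

theory Submission
  imports Defs
begin

lemma tournament:
  fixes A :: "'a set" and lose :: "'a \<Rightarrow> 'a \<Rightarrow> bool" and \<alpha> :: real
  assumes fin: "finite A" and anti: "\<And>a b. lose a b \<Longrightarrow> \<not> lose b a" and al: "0 \<le> \<alpha>"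
  shows "real (card {a\<in>A. real (card {b\<in>A-{a}. lose a b}) > (1-\<alpha>) * card A}) \<le> 2*\<alpha>*card A"
proof -
  define S where "S = {a\<in>A. real (card {b\<in>A-{a}. lose a b}) > (1-\<alpha>) * card A}"
  define s where "s = card S"
  define N where "N = card A"
  have SA: "S \<subseteq> A" unfolding S_def by auto
  have finS: "finite S" using SA fin finite_subset by blast
  have sN: "s \<le> N" unfolding s_def N_def using SA fin by (simp add: card_mono)
  show ?thesis
  proof (cases "s = 0")
    case True then show ?thesis using al unfolding S_def[symmetric] s_def[symmetric] by simp
  next
    case False
    define Pr where "Pr = {(a,b)\<in>S\<times>S. lose a b}"
    have finPr: "finite Pr" unfolding Pr_def using finS by (auto intro: finite_subset[of _ "S\<times>S"])
    have "Pr \<inter> converse Pr = {}" unfolding Pr_def using anti by auto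
    moreover have "Pr \<union> converse Pr \<subseteq> S\<times>S - Id" unfolding Pr_def using anti by auto
    ultimately have "card Pr + card (converse Pr) \<le> card (S\<times>S - Id)"
    proof -
      assume d: "Pr \<inter> converse Pr = {}" and u: "Pr \<union> converse Pr \<subseteq> S\<times>S - Id"
      have "card (Pr \<union> converse Pr) = card Pr + card (converse Pr)"
        by (rule card_Un_disjoint) (use finPr d in auto)
      moreover have "card (Pr \<union> converse Pr) \<le> card (S\<times>S - Id)"
        by (rule card_mono) (use finS u in auto)
      ultimately show ?thesis by simp
    qed
    moreover have "card (S\<times>S - Id) = s * s - s"
    proof -
      have "S\<times>S \<inter> Id = (\<lambda>a. (a,a)) ` S" by auto
      hence "card (S\<times>S \<inter> Id) = s" unfolding s_def by (simp add: card_image inj_on_def)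
      moreover have "card (S\<times>S - Id) = card (S\<times>S) - card (S\<times>S \<inter> Id)"
        by (rule card_Diff_subset_Int) (use finS in auto)
      ultimately show ?thesis unfolding s_def by (simp add: card_cartesian_product)
    qed
    ultimately have cPr: "2 * card Pr \<le> s * s - s" by simp
    have step: "card {b\<in>A-{a}. lose a b} \<le> card {b\<in>S. lose a b} + (N - s)" if "a \<in> S" for a
    proof -
      have "{b\<in>A-{a}. lose a b} \<subseteq> {b\<in>S. lose a b} \<union> (A - S)" by auto
      hence "card {b\<in>A-{a}. lose a b} \<le> card ({b\<in>S. lose a b} \<union> (A - S))"
        by (intro card_mono) (use fin finS in auto)
      also have "\<dots> \<le> card {b\<in>S. lose a b} + card (A - S)" by (rule card_Un_le)
      also have "card (A - S) = N - s" unfolding N_def s_def using SA fin by (simp add: card_Diff_subset finite_subset)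
      finally show ?thesis .
    qed
    have sumPr: "(\<Sum>a\<in>S. card {b\<in>S. lose a b}) = card Pr"
    proof -
      have "Pr = (\<Union>a\<in>S. (\<lambda>b. (a,b)) ` {b\<in>S. lose a b})" unfolding Pr_def by auto
      moreover have "card (\<Union>a\<in>S. (\<lambda>b. (a,b)) ` {b\<in>S. lose a b}) = (\<Sum>a\<in>S. card ((\<lambda>b. (a,b)) ` {b\<in>S. lose a b}))"
        by (rule card_UN_disjoint) (use finS in auto)
      moreover have "card ((\<lambda>b. (a,b)) ` {b\<in>S. lose a b}) = card {b\<in>S. lose a b}" for a
        by (simp add: card_image inj_on_def)
      ultimately show ?thesis by simp
    qed
    have "(\<Sum>a\<in>S. real (card {b\<in>A-{a}. lose a b})) \<le> (\<Sum>a\<in>S. real (card {b\<in>S. lose a b} + (N - s)))"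
      by (intro sum_mono) (metis step of_nat_add of_nat_le_iff)
    also have "\<dots> = real (card Pr) + real s * real (N - s)"
      by (simp add: sum.distrib sumPr[symmetric] s_def)
    finally have up: "(\<Sum>a\<in>S. real (card {b\<in>A-{a}. lose a b})) \<le> real (card Pr) + real s * real (N - s)" .
    have "(\<Sum>a\<in>S. (1-\<alpha>) * N) < (\<Sum>a\<in>S. real (card {b\<in>A-{a}. lose a b}))"
      by (rule sum_strict_mono) (use finS False s_def S_def N_def in auto)
    hence lo: "real s * ((1-\<alpha>) * N) < (\<Sum>a\<in>S. real (card {b\<in>A-{a}. lose a b}))" by (simp add: s_def)
    have cPr': "2 * real (card Pr) \<le> real s * real s - real s"
    proof -
      have "s \<le> s * s" by (simp add: le_square)
      hence "real (s * s - s) = real s * real s - real s" by (simp add: of_nat_diff)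
      moreover have "real (2 * card Pr) \<le> real (s * s - s)" using cPr by (simp only: of_nat_le_iff)
      ultimately show ?thesis by simp
    qed
    have "real s * ((1-\<alpha>) * N) < real s * real s / 2 - real s / 2 + real s * (real N - real s)"
      using lo up cPr' sN by (simp add: of_nat_diff)
    hence "real s * (1 + real s) < real s * (2*\<alpha>*N)" by (simp add: algebra_simps)
    hence "1 + real s < 2*\<alpha>*N" using False by (simp add: mult_less_cancel_left_pos)
    hence "real s < 2*\<alpha>*N" by simp
    thus ?thesis unfolding s_def S_def N_def by linarith
  qed
qed

lemma map_replicate_pmf: "map_pmf (map f) (replicate_pmf N d) = replicate_pmf N (map_pmf f d)"
proof (induction N)
  case (Suc N)
  have "map_pmf (map f) (replicate_pmf (Suc N) d)
      = d \<bind> (\<lambda>x. map_pmf (Cons (f x)) (map_pmf (map f) (replicate_pmf N d)))"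
    by (simp add: map_bind_pmf pmf.map_comp o_def map_pmf_def[symmetric])
  also have "\<dots> = map_pmf f d \<bind> (\<lambda>y. map_pmf (Cons y) (replicate_pmf N (map_pmf f d)))"
    by (simp add: Suc.IH bind_map_pmf)
  finally show ?case by (simp add: map_pmf_def[symmetric])
qed simp

lemma filter_replicate_pmf:
  assumes d: "d = bernoulli_pmf q \<bind> (\<lambda>b. if b then d1 else d0)" and q: "0 \<le> q" "q \<le> 1"
    and d1: "\<And>x. x \<in> set_pmf d1 \<Longrightarrow> P x"
    and d0: "\<And>x. q < 1 \<Longrightarrow> x \<in> set_pmf d0 \<Longrightarrow> \<not> P x"
  shows "map_pmf (filter P) (replicate_pmf N d) = binomial_pmf N q \<bind> (\<lambda>B. replicate_pmf B d1)"
proof (induction N)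
  case 0
  then show ?case using q by (simp add: binomial_pmf_0 bind_return_pmf)
next
  case (Suc N)
  have "map_pmf (filter P) (replicate_pmf (Suc N) d)
      = d \<bind> (\<lambda>x. map_pmf (\<lambda>xs. filter P (x#xs)) (replicate_pmf N d))"
    by (simp add: map_bind_pmf map_pmf_def[symmetric] pmf.map_comp o_def)
  also have "\<dots> = bernoulli_pmf q \<bind> (\<lambda>b. (if b then d1 else d0) \<bind>
                   (\<lambda>x. map_pmf (\<lambda>xs. filter P (x#xs)) (replicate_pmf N d)))"
    unfolding d by (simp add: bind_assoc_pmf)
  also have "\<dots> = bernoulli_pmf q \<bind> (\<lambda>b. binomial_pmf N q \<bind>
                   (\<lambda>k. replicate_pmf ((if b then 1 else 0) + k) d1))"
  proof (rule bind_pmf_cong[OF refl])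
    fix b assume b: "b \<in> set_pmf (bernoulli_pmf q)"
    show "(if b then d1 else d0) \<bind> (\<lambda>x. map_pmf (\<lambda>xs. filter P (x#xs)) (replicate_pmf N d))
        = binomial_pmf N q \<bind> (\<lambda>k. replicate_pmf ((if b then 1 else 0) + k) d1)"
    proof (cases b)
      case True
      have "d1 \<bind> (\<lambda>x. map_pmf (\<lambda>xs. filter P (x#xs)) (replicate_pmf N d))
          = d1 \<bind> (\<lambda>x. map_pmf (Cons x) (map_pmf (filter P) (replicate_pmf N d)))"
        by (intro bind_pmf_cong refl) (simp add: d1 pmf.map_comp o_def)
      also have "\<dots> = d1 \<bind> (\<lambda>x. binomial_pmf N q \<bind> (\<lambda>k. map_pmf (Cons x) (replicate_pmf k d1)))"
        by (simp add: Suc.IH map_bind_pmf)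
      also have "\<dots> = binomial_pmf N q \<bind> (\<lambda>k. d1 \<bind> (\<lambda>x. map_pmf (Cons x) (replicate_pmf k d1)))"
        by (rule bind_commute_pmf)
      also have "\<dots> = binomial_pmf N q \<bind> (\<lambda>k. replicate_pmf (1 + k) d1)"
        by (simp add: map_pmf_def)
      finally show ?thesis using True by simp
    next
      case False
      with b have "q < 1" using q by (auto simp: set_pmf_iff)
      have "d0 \<bind> (\<lambda>x. map_pmf (\<lambda>xs. filter P (x#xs)) (replicate_pmf N d))
          = d0 \<bind> (\<lambda>x. map_pmf (filter P) (replicate_pmf N d))"
        by (intro bind_pmf_cong refl) (simp add: d0[OF \<open>q < 1\<close>])
      also have "\<dots> = binomial_pmf N q \<bind> (\<lambda>k. replicate_pmf k d1)"
        by (simp add: Suc.IH)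
      finally show ?thesis using False by simp
    qed
  qed
  also have "\<dots> = binomial_pmf (Suc N) q \<bind> (\<lambda>B. replicate_pmf B d1)"
    using q by (simp add: binomial_pmf_Suc bind_assoc_pmf bind_return_pmf)
  finally show ?case .
qed

lemma bernoulli_cond_decomp:
  assumes q: "0 < measure_pmf.prob d E" "measure_pmf.prob d E < 1"
  shows "d = bernoulli_pmf (measure_pmf.prob d E) \<bind> (\<lambda>b. if b then cond_pmf d E else cond_pmf d (- E))"
proof (rule pmf_eqI)
  fix x
  have E1: "set_pmf d \<inter> E \<noteq> {}"
    using q(1) by (metis measure_pmf_zero_iff order_less_irrefl)
  have "measure_pmf.prob d (- E) = 1 - measure_pmf.prob d E"
    by (simp add: measure_pmf.prob_compl[symmetric] Compl_eq_Diff_UNIV)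
  hence qc: "measure_pmf.prob d (- E) > 0" using q by simp
  have E2: "set_pmf d \<inter> - E \<noteq> {}"
    using qc by (metis measure_pmf_zero_iff order_less_irrefl)
  show "pmf d x = pmf (bernoulli_pmf (measure_pmf.prob d E) \<bind> (\<lambda>b. if b then cond_pmf d E else cond_pmf d (- E))) x"
    using q qc E1 E2 \<open>measure_pmf.prob d (- E) = 1 - measure_pmf.prob d E\<close>
    by (auto simp: pmf_bind UNIV_bool pmf_cond integral_measure_pmf[where A=UNIV] )
qed

lemma Pi_pmf_pair:
  fixes p :: "'a \<Rightarrow> 'b pmf" and q :: "'a \<Rightarrow> 'c pmf"
  assumes fin: "finite I"
  shows "do {f \<leftarrow> Pi_pmf I u p; g \<leftarrow> Pi_pmf I v q; return_pmf (\<lambda>b. (f b, g b))}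
       = Pi_pmf I (u,v) (\<lambda>b. pair_pmf (p b) (q b))"
proof -
  define h :: "('a \<Rightarrow> 'b) \<times> ('a \<Rightarrow> 'c) \<Rightarrow> 'a \<Rightarrow> 'b \<times> 'c" where "h = (\<lambda>(f,g) b. (f b, g b))"
  have inj: "inj h" unfolding h_def inj_def by (auto simp: fun_eq_iff)
  have lhs: "do {f \<leftarrow> Pi_pmf I u p; g \<leftarrow> Pi_pmf I v q; return_pmf (\<lambda>b. (f b, g b))}
      = map_pmf h (pair_pmf (Pi_pmf I u p) (Pi_pmf I v q))"
    by (simp add: pair_pmf_def map_bind_pmf h_def)
  show ?thesis unfolding lhs
  proof (rule pmf_eqI)
    fix F :: "'a \<Rightarrow> 'b \<times> 'c"
    have F: "F = h (fst \<circ> F, snd \<circ> F)" by (simp add: h_def fun_eq_iff)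
    have "pmf (map_pmf h (pair_pmf (Pi_pmf I u p) (Pi_pmf I v q))) F
        = pmf (Pi_pmf I u p) (fst \<circ> F) * pmf (Pi_pmf I v q) (snd \<circ> F)"
      by (subst F, subst pmf_map_inj') (use inj in \<open>simp_all add: pmf_pair\<close>)
    also have "\<dots> = pmf (Pi_pmf I (u,v) (\<lambda>b. pair_pmf (p b) (q b))) F"
    proof -
      have "(\<Prod>x\<in>I. pmf (pair_pmf (p x) (q x)) (F x)) = (\<Prod>x\<in>I. pmf (p x) (fst (F x)) * pmf (q x) (snd (F x)))"
        by (intro prod.cong refl) (metis pmf_pair prod.collapse)
      thus ?thesis using fin by (auto simp: pmf_Pi prod.distrib prod_eq_iff)
    qed
    finally show "pmf (map_pmf h (pair_pmf (Pi_pmf I u p) (Pi_pmf I v q))) F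
        = pmf (Pi_pmf I (u,v) (\<lambda>b. pair_pmf (p b) (q b))) F" .
  qed
qed

lemma Pi_pmf_list:
  "map_pmf (\<lambda>h. map h [0..<B]) (Pi_pmf {..<B} dd (\<lambda>_. D)) = replicate_pmf B D"
proof (induction B)
  case 0
  then show ?case by simp
next
  case (Suc B)
  have "Pi_pmf {..<Suc B} dd (\<lambda>_. D) = map_pmf (\<lambda>(y,f). f(B:=y)) (pair_pmf D (Pi_pmf {..<B} dd (\<lambda>_. D)))"
    using Pi_pmf_insert[of "{..<B}" B dd "\<lambda>_. D"] by (simp add: lessThan_Suc)
  hence "map_pmf (\<lambda>h. map h [0..<Suc B]) (Pi_pmf {..<Suc B} dd (\<lambda>_. D))
      = map_pmf (\<lambda>(y,f). map f [0..<B] @ [y]) (pair_pmf D (Pi_pmf {..<B} dd (\<lambda>_. D)))"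
    by (simp add: pmf.map_comp o_def case_prod_unfold)
  also have "\<dots> = map_pmf (\<lambda>(y,xs). xs @ [y]) (pair_pmf D (map_pmf (\<lambda>h. map h [0..<B]) (Pi_pmf {..<B} dd (\<lambda>_. D))))"
  proof -
    have eq: "map_pmf (\<lambda>(a, b). (id a, map b [0..<B])) (pair_pmf D (Pi_pmf {..<B} dd (\<lambda>_. D)))
       = pair_pmf (map_pmf id D) (map_pmf (\<lambda>h. map h [0..<B]) (Pi_pmf {..<B} dd (\<lambda>_. D)))"
      by (rule map_pair)
    have eq': "pair_pmf D (map_pmf (\<lambda>h. map h [0..<B]) (Pi_pmf {..<B} dd (\<lambda>_. D)))
       = map_pmf (\<lambda>(a, b). (a, map b [0..<B])) (pair_pmf D (Pi_pmf {..<B} dd (\<lambda>_. D)))"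
      using eq by simp
    show ?thesis unfolding eq' by (simp add: pmf.map_comp o_def case_prod_unfold)
  qed
  also have "\<dots> = D \<bind> (\<lambda>y. replicate_pmf B D \<bind> (\<lambda>xs. return_pmf (xs @ [y])))"
    unfolding Suc.IH by (simp add: pair_pmf_def map_bind_pmf bind_return_pmf map_pmf_def bind_assoc_pmf)
  also have "\<dots> = replicate_pmf B D \<bind> (\<lambda>xs. D \<bind> (\<lambda>y. return_pmf (xs @ [y])))"
    by (rule bind_commute_pmf)
  also have "\<dots> = replicate_pmf (B + 1) D"
    unfolding replicate_pmf_distrib
    by (simp add: bind_return_pmf bind_assoc_pmf)
  finally show ?case by simp
qed

locale csf =
  fixes MX :: "'x measure" and P :: "nat \<Rightarrow> 'x measure" and Q :: "nat \<Rightarrow> 'x measure"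
    and S :: "'s measure"
    and fit :: "('x \<times> nat option) multiset \<Rightarrow> 's \<Rightarrow> nat \<Rightarrow> 'x \<Rightarrow> real"
    and K n m Bt :: nat and ytr yte :: "nat \<Rightarrow> nat" and \<alpha> \<gamma> :: real and i k :: nat
  assumes P: "\<And>k. k \<in> {1..K} \<Longrightarrow> prob_space (P k) \<and> sets (P k) = sets MX"
    and Q: "\<And>i. i < m \<Longrightarrow> yte i \<notin> {1..K} \<Longrightarrow> prob_space (Q i) \<and> sets (Q i) = sets MX"
    and S: "prob_space S"
    and ytr: "\<And>j. j < n \<Longrightarrow> ytr j \<in> {1..K}"
    and fit_meas: "\<And>ls c. (\<lambda>((xs, s), x). fit (mset (map (\<lambda>p. (xs p, ls ! p)) [0..<length ls])) s c x)
                       \<in> borel_measurable ((PiM {..<length ls} (\<lambda>_. MX) \<Otimes>\<^sub>M S) \<Otimes>\<^sub>M MX)"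
    and al: "0 < \<alpha>" "\<alpha> < 1"
    and i: "i < m" and k: "k \<in> {1..K}" and yk: "yte i = k"
begin

definition "Cl = class_idx n ytr k"
definition "nk = card Cl"
definition "so = other_size n m \<gamma> ytr k"
definition "Oth = other_idx n ytr k"
definition "Tset = {..<n+m}"
definition "Aset = insert (n+i) Cl"
definition "Rf j = (if j < n then P (ytr j) else if j < n+m then (if yte (j-n) \<in> {1..K} then P (yte (j-n)) else Q (j-n)) else P k)"
definition "Xm = PiM Tset Rf"
definition "SdM L = PiM {..<L} (\<lambda>_. S)"

definition "Dat x bg = (case bg of (tb,eb,ob) \<Rightarrow>
     mset (map (\<lambda>p. (x (tb p), Some k)) [0..<nk])
   + mset (map (\<lambda>p. (x (n + eb p), None)) [0..<m])
   + mset (map (\<lambda>p. (x (ob p), Some (ytr (ob p)))) [0..<so]))"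

definition "Jset bl a b = {j. j < length bl \<and> a \<notin> fst (bl!j) ` {..<nk} \<and> b \<notin> fst (bl!j) ` {..<nk}
      \<and> i \<notin> fst (snd (bl!j)) ` {..<m}}"

definition "Fh bl a b x s u = (\<Sum>j\<in>Jset bl a b. fit (Dat x (bl!j)) (s j) k u) / real (card (Jset bl a b))"

definition "Fail bl a x s =
   (1 + real (card {b \<in> Aset - {a}. Fh bl a b x s (x b) \<le> Fh bl a b x s (x a)}) < \<alpha> * real (nk+1))"

definition "TB pool = Pi_pmf {..<nk} undefined (\<lambda>_. pmf_of_set pool)"
definition "EB = Pi_pmf {..<m} undefined (\<lambda>_. pmf_of_set {..<m})"
definition "OB = Pi_pmf {..<so} undefined (\<lambda>_. pmf_of_set Oth)"
definition "bag pool = pair_pmf (TB pool) (pair_pmf EB OB)"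
definition "Pn bg = (n+i \<notin> fst bg ` {..<nk})"
definition "valid bg = ((\<forall>p<nk. fst bg p \<in> Aset) \<and> (\<forall>p<m. fst (snd bg) p < m) \<and> (\<forall>p<so. snd (snd bg) p \<in> Oth))"

lemma Cl_sub: "Cl \<subseteq> {..<n}" by (auto simp: Cl_def class_idx_def)
lemma finite_Cl[simp]: "finite Cl" using Cl_sub finite_subset by blast
lemma Cl_k: "j \<in> Cl \<Longrightarrow> ytr j = k" by (auto simp: Cl_def class_idx_def)
lemma ni_notin_Cl[simp]: "n + i \<notin> Cl" using Cl_sub by auto
lemma finite_Aset[simp]: "finite Aset" by (simp add: Aset_def)
lemma card_Aset: "card Aset = nk + 1" by (simp add: Aset_def nk_def)
lemma Aset_T: "Aset \<subseteq> Tset" using Cl_sub i by (auto simp: Aset_def Tset_def)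
lemma Oth_eq: "Oth = {..<n} - Cl" by (auto simp: Oth_def other_idx_def Cl_def class_idx_def)
lemma Oth_sub: "Oth \<subseteq> {..<n}" by (auto simp: Oth_eq)
lemma finite_Oth[simp]: "finite Oth" using Oth_sub finite_subset by blast
lemma card_Oth: "card Oth = n - nk"
  by (simp add: Oth_eq nk_def card_Diff_subset Cl_sub)
lemma so_le: "so \<le> card Oth"
  by (simp add: so_def other_size_def card_Oth nk_def Cl_def)
lemma Oth_ne: "so > 0 \<Longrightarrow> Oth \<noteq> {}" using so_le by auto
lemma Oth_Aset: "j \<in> Oth \<Longrightarrow> j \<notin> Aset" using Oth_sub by (auto simp: Oth_eq Aset_def)
lemma Aset_ne[simp]: "Aset \<noteq> {}" by (simp add: Aset_def)
lemma ni_Aset[simp]: "n + i \<in> Aset" by (simp add: Aset_def)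

lemma set_TB: "pool \<noteq> {} \<Longrightarrow> finite pool \<Longrightarrow> tb \<in> set_pmf (TB pool) \<Longrightarrow> p < nk \<Longrightarrow> tb p \<in> pool"
  by (auto simp: TB_def set_Pi_pmf PiE_dflt_def)
lemma set_EB: "eb \<in> set_pmf EB \<Longrightarrow> p < m \<Longrightarrow> eb p < m"
proof -
  have "m \<noteq> 0" using i by simp
  hence "set_pmf (pmf_of_set {..<m}) = {..<m}" by (intro set_pmf_of_set) auto
  thus "eb \<in> set_pmf EB \<Longrightarrow> p < m \<Longrightarrow> eb p < m" by (auto simp: EB_def set_Pi_pmf PiE_dflt_def)
qed
lemma set_OB: "ob \<in> set_pmf OB \<Longrightarrow> p < so \<Longrightarrow> ob p \<in> Oth"
  using Oth_ne by (auto simp: OB_def set_Pi_pmf PiE_dflt_def)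

lemma valid_bagA: "bg \<in> set_pmf (bag Aset) \<Longrightarrow> valid bg"
proof -
  assume bg: "bg \<in> set_pmf (bag Aset)"
  have "fst bg p \<in> Aset" if "p < nk" for p
    using set_TB[of Aset "fst bg" p] bg that by (auto simp: bag_def)
  thus ?thesis using bg by (auto simp: bag_def valid_def dest: set_EB set_OB)
qed

lemma Cl_ne_if: "nk > 0 \<Longrightarrow> Cl \<noteq> {}" by (auto simp: nk_def)

lemma valid_bagC: "bg \<in> set_pmf (bag Cl) \<Longrightarrow> valid bg \<and> Pn bg"
proof -
  assume bg: "bg \<in> set_pmf (bag Cl)"
  have tb: "fst bg p \<in> Cl" if "p < nk" for p
    using bg that Cl_ne_if[of] by (auto simp: bag_def intro: set_TB)
  have "fst bg p \<in> Aset" if "p < nk" for p using tb[OF that] by (simp add: Aset_def)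
  moreover have "n + i \<notin> fst bg ` {..<nk}" using tb ni_notin_Cl by (metis imageE lessThan_iff)
  ultimately show ?thesis using bg
    by (auto simp: bag_def valid_def Pn_def dest: set_EB set_OB)
qed

end

context csf begin

lemma Jset_sym: "Jset bl a b = Jset bl b a" unfolding Jset_def by auto
lemma Fh_sym: "Fh bl a b = Fh bl b a" unfolding Fh_def by (simp add: Jset_sym fun_eq_iff)

lemma Fail_count: "real (card {a\<in>Aset. Fail bl a x s}) \<le> 2*\<alpha>*real (nk+1)"
proof -
  define lose where "lose a b = (Fh bl a b x s (x a) < Fh bl a b x s (x b))" for a b
  have anti: "lose a b \<Longrightarrow> \<not> lose b a" for a b unfolding lose_def by (simp add: Fh_sym)
  have eq: "{a\<in>Aset. Fail bl a x s} = {a\<in>Aset. real (card {b\<in>Aset-{a}. lose a b}) > (1-\<alpha>) * card Aset}"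
  proof (intro Collect_cong conj_cong refl)
    fix a assume a: "a \<in> Aset"
    have fin: "finite (Aset - {a})" by simp
    have split: "card {b\<in>Aset-{a}. Fh bl a b x s (x b) \<le> Fh bl a b x s (x a)} + card {b\<in>Aset-{a}. lose a b} = nk"
    proof -
      have "card {b\<in>Aset-{a}. Fh bl a b x s (x b) \<le> Fh bl a b x s (x a)} + card {b\<in>Aset-{a}. lose a b}
          = card ({b\<in>Aset-{a}. Fh bl a b x s (x b) \<le> Fh bl a b x s (x a)} \<union> {b\<in>Aset-{a}. lose a b})"
        by (rule card_Un_disjoint[symmetric]) (auto simp: lose_def)
      also have "{b\<in>Aset-{a}. Fh bl a b x s (x b) \<le> Fh bl a b x s (x a)} \<union> {b\<in>Aset-{a}. lose a b} = Aset - {a}"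
        by (auto simp: lose_def)
      also have "card (Aset - {a}) = nk" using a card_Aset by simp
      finally show ?thesis .
    qed
    show "Fail bl a x s = ((1-\<alpha>) * card Aset < real (card {b\<in>Aset-{a}. lose a b}))"
      unfolding Fail_def card_Aset using split
      by (smt (verit, ccfv_SIG) left_diff_distrib' mult_cancel_right1 of_nat_add of_nat_1)
  qed
  show ?thesis unfolding eq card_Aset[symmetric]
    by (rule tournament) (use anti al in auto)
qed

end

context csf begin

definition "pos bg p = (case bg of (tb,eb,ob) \<Rightarrow>
   if p < nk then tb p else if p < nk+m then n + eb (p-nk) else ob (p-nk-m))"
definition "labs bg = (case bg of (tb,eb,ob) \<Rightarrow>
   replicate nk (Some k) @ replicate m None @ map (\<lambda>p. Some (ytr (ob p))) [0..<so])"

lemma length_labs[simp]: "length (labs bg) = nk+m+so"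
  by (simp add: labs_def split: prod.splits)

lemma Dat_alt: "Dat x bg = mset (map (\<lambda>p. (x (pos bg p), labs bg ! p)) [0..<nk+m+so])"
proof -
  obtain tb eb ob where bg: "bg = (tb,eb,ob)" by (cases bg) auto
  have u: "[0..<nk+m+so] = [0..<nk] @ map (\<lambda>q. q + nk) [0..<m] @ map (\<lambda>q. q + (nk+m)) [0..<so]"
  proof -
    have 1: "[0..<nk+m+so] = [0..<nk+m] @ [nk+m..<nk+m+so]" by (rule upt_add_eq_append) simp
    have 2: "[0..<nk+m] = [0..<nk] @ [nk..<nk+m]" by (rule upt_add_eq_append) simp
    have 3: "[nk..<nk+m] = map (\<lambda>q. q + nk) [0..<m]" using map_add_upt[of nk m] by (simp add: add.commute)
    have 4: "[nk+m..<nk+m+so] = map (\<lambda>q. q + (nk+m)) [0..<so]" using map_add_upt[of "nk+m" so] by (simp add: add.commute)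
    show ?thesis using 1 2 3 4 by simp
  qed
  have "map (\<lambda>p. (x (pos bg p), labs bg ! p)) [0..<nk+m+so]
     = map (\<lambda>p. (x (tb p), Some k)) [0..<nk] @ map (\<lambda>p. (x (n+eb p), None)) [0..<m]
       @ map (\<lambda>p. (x (ob p), Some (ytr (ob p)))) [0..<so]"
    unfolding u by (simp add: pos_def labs_def nth_append bg)
  thus ?thesis unfolding Dat_def bg by simp
qed

lemma pos_T: assumes "valid bg" "p < nk+m+so" shows "pos bg p \<in> Tset"
proof -
  obtain tb eb ob where bg: "bg = (tb,eb,ob)" by (cases bg) auto
  show ?thesis
  proof (cases "p < nk")
    case True thus ?thesis using assms Aset_T by (auto simp: bg valid_def pos_def)
  next
    case F1: False
    show ?thesis
    proof (cases "p < nk + m")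
      case True thus ?thesis using assms F1 by (auto simp: bg valid_def pos_def Tset_def)
    next
      case False
      hence "p - nk - m < so" using assms by simp
      hence "ob (p - nk - m) \<in> Oth" using assms by (auto simp: bg valid_def)
      thus ?thesis using False F1 Oth_sub by (auto simp: bg pos_def Tset_def)
    qed
  qed
qed

lemma g_meas:
  assumes bg: "valid bg" and c: "c \<in> Tset"
    and xv: "\<And>j. j \<in> Tset \<Longrightarrow> (\<lambda>\<omega>. xv \<omega> j) \<in> measurable M MX"
    and sv: "(\<lambda>\<omega>. sv \<omega>) \<in> measurable M S"
  shows "(\<lambda>\<omega>. fit (Dat (xv \<omega>) bg) (sv \<omega>) k (xv \<omega> c)) \<in> borel_measurable M"
proof -
  define ls where "ls = labs bg"
  define L where "L = nk+m+so"
  have L: "length ls = L" by (simp add: ls_def L_def)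
  have Fm: "(\<lambda>((xs, s), x). fit (mset (map (\<lambda>p. (xs p, ls ! p)) [0..<L])) s k x)
             \<in> borel_measurable ((PiM {..<L} (\<lambda>_. MX) \<Otimes>\<^sub>M S) \<Otimes>\<^sub>M MX)"
    using fit_meas[of ls k] unfolding L .
  have Phi: "(\<lambda>\<omega>. ((\<lambda>p\<in>{..<L}. xv \<omega> (pos bg p), sv \<omega>), xv \<omega> c))
     \<in> measurable M ((PiM {..<L} (\<lambda>_. MX) \<Otimes>\<^sub>M S) \<Otimes>\<^sub>M MX)"
  proof (intro measurable_Pair measurable_restrict sv xv c)
    fix p assume "p \<in> {..<L}"
    thus "pos bg p \<in> Tset" using pos_T[OF bg] by (simp add: L_def)
  qed
  have "(\<lambda>\<omega>. (\<lambda>((xs, s), x). fit (mset (map (\<lambda>p. (xs p, ls ! p)) [0..<L])) s k x)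
            ((\<lambda>p\<in>{..<L}. xv \<omega> (pos bg p), sv \<omega>), xv \<omega> c)) \<in> borel_measurable M"
    using measurable_comp[OF Phi Fm] by (simp add: o_def)
  moreover have "(\<lambda>((xs, s), x). fit (mset (map (\<lambda>p. (xs p, ls ! p)) [0..<L])) s k x)
            ((\<lambda>p\<in>{..<L}. xv \<omega> (pos bg p), sv \<omega>), xv \<omega> c) = fit (Dat (xv \<omega>) bg) (sv \<omega>) k (xv \<omega> c)" for \<omega>
  proof -
    have "map (\<lambda>p. ((\<lambda>p\<in>{..<L}. xv \<omega> (pos bg p)) p, ls ! p)) [0..<L] = map (\<lambda>p. (xv \<omega> (pos bg p), ls ! p)) [0..<L]"
      by (intro map_cong) auto
    thus ?thesis by (simp only: Dat_alt ls_def L_def case_prod_conv)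
  qed
  ultimately show ?thesis by simp
qed

lemma card_sum_if: "finite F \<Longrightarrow> real (card {b\<in>F. Pr b}) = (\<Sum>b\<in>F. if Pr b then 1 else 0)"
  by (simp add: sum.inter_filter[symmetric])

lemma Fail_meas:
  assumes bl: "\<And>bg. bg \<in> set bl \<Longrightarrow> valid bg" and a: "a \<in> Aset"
    and xv: "\<And>j. j \<in> Tset \<Longrightarrow> (\<lambda>\<omega>. xv \<omega> j) \<in> measurable M MX"
    and sv: "\<And>j. j < length bl \<Longrightarrow> (\<lambda>\<omega>. sv \<omega> j) \<in> measurable M S"
  shows "{\<omega> \<in> space M. Fail bl a (xv \<omega>) (sv \<omega>)} \<in> sets M"
proof -
  have Fhm: "(\<lambda>\<omega>. Fh bl b c (xv \<omega>) (sv \<omega>) (xv \<omega> d)) \<in> borel_measurable M" if "d \<in> Tset" for b c d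
  proof -
    have "(\<lambda>\<omega>. \<Sum>j\<in>Jset bl b c. fit (Dat (xv \<omega>) (bl!j)) (sv \<omega> j) k (xv \<omega> d)) \<in> borel_measurable M"
    proof (rule borel_measurable_sum)
      fix j assume "j \<in> Jset bl b c"
      hence j: "j < length bl" by (simp add: Jset_def)
      show "(\<lambda>\<omega>. fit (Dat (xv \<omega>) (bl!j)) (sv \<omega> j) k (xv \<omega> d)) \<in> borel_measurable M"
        by (rule g_meas[OF bl[OF nth_mem[OF j]] that xv sv[OF j]])
    qed
    thus ?thesis unfolding Fh_def by (rule borel_measurable_divide) simp
  qed
  have cm: "(\<lambda>\<omega>. real (card {b \<in> Aset - {a}. Fh bl a b (xv \<omega>) (sv \<omega>) (xv \<omega> b) \<le> Fh bl a b (xv \<omega>) (sv \<omega>) (xv \<omega> a)}))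
      \<in> borel_measurable M"
  proof -
    have "(\<lambda>\<omega>. \<Sum>b\<in>Aset - {a}. if Fh bl a b (xv \<omega>) (sv \<omega>) (xv \<omega> b) \<le> Fh bl a b (xv \<omega>) (sv \<omega>) (xv \<omega> a) then 1 else (0::real))
      \<in> borel_measurable M"
    proof (rule borel_measurable_sum)
      fix b assume b: "b \<in> Aset - {a}"
      have [measurable]: "(\<lambda>\<omega>. Fh bl a b (xv \<omega>) (sv \<omega>) (xv \<omega> b)) \<in> borel_measurable M"
        using b Aset_T by (intro Fhm) auto
      have [measurable]: "(\<lambda>\<omega>. Fh bl a b (xv \<omega>) (sv \<omega>) (xv \<omega> a)) \<in> borel_measurable M"
        using a Aset_T by (intro Fhm) auto
      show "(\<lambda>\<omega>. if Fh bl a b (xv \<omega>) (sv \<omega>) (xv \<omega> b) \<le> Fh bl a b (xv \<omega>) (sv \<omega>) (xv \<omega> a) then 1 else (0::real))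
        \<in> borel_measurable M" by (rule measurable_If) (simp_all add: borel_measurable_le)
    qed
    moreover have "real (card {b \<in> Aset - {a}. Fh bl a b (xv \<omega>) (sv \<omega>) (xv \<omega> b) \<le> Fh bl a b (xv \<omega>) (sv \<omega>) (xv \<omega> a)})
      = (\<Sum>b\<in>Aset - {a}. if Fh bl a b (xv \<omega>) (sv \<omega>) (xv \<omega> b) \<le> Fh bl a b (xv \<omega>) (sv \<omega>) (xv \<omega> a) then 1 else (0::real))" for \<omega>
      by (rule card_sum_if) simp
    ultimately show ?thesis by presburger
  qed
  have "(\<lambda>\<omega>. 1 + real (card {b \<in> Aset - {a}. Fh bl a b (xv \<omega>) (sv \<omega>) (xv \<omega> b) \<le> Fh bl a b (xv \<omega>) (sv \<omega>) (xv \<omega> a)}))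
      \<in> borel_measurable M" by (rule borel_measurable_add[OF _ cm]) simp
  thus ?thesis unfolding Fail_def by (rule borel_measurable_less) simp
qed

end

context csf begin

definition "Xtr = PiM {..<n} (\<lambda>j. P (ytr j))"
definition "Rte i' = (if yte i' \<in> {1..K} then P (yte i') else Q i')"
definition "Xte = PiM {..<m} Rte"
definition "SeedPi = PiM ({1..K} \<times> {..<Bt}) (\<lambda>_. S)"
definition "Om = (Xtr \<Otimes>\<^sub>M Xte) \<Otimes>\<^sub>M SeedPi"
definition "mrg = (\<lambda>(a,b). \<lambda>j\<in>Tset. if j < n then a j else b (j-n))"
definition "Jt = {n..<n+m}"
definition "sh = (\<lambda>y. \<lambda>j\<in>Jt. y (j-n))"

lemma Rf_prob: "prob_space (Rf j) \<and> sets (Rf j) = sets MX"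
  using P Q ytr k by (auto simp: Rf_def)

lemma Rf_ps: "prob_space (Rf j)" using Rf_prob by blast
lemma Rf_sets: "sets (Rf j) = sets MX" using Rf_prob by blast

lemma Rte_prob: "i' < m \<Longrightarrow> prob_space (Rte i')"
  using P Q by (auto simp: Rte_def)

lemma prob_Xm: "prob_space Xm" unfolding Xm_def by (intro prob_space_PiM Rf_ps)
lemma prob_SdM: "prob_space (SdM L)" unfolding SdM_def by (intro prob_space_PiM S)
lemma prob_Xtr: "prob_space Xtr" unfolding Xtr_def using P ytr by (intro prob_space_PiM) auto
lemma prob_Xte: "prob_space Xte" unfolding Xte_def using Rte_prob by (intro prob_space_PiM) auto
lemma prob_SeedPi: "prob_space SeedPi" unfolding SeedPi_def by (intro prob_space_PiM S)
lemma prob_Om: "prob_space Om" unfolding Om_def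
  by (intro prob_space_pair prob_Xtr prob_Xte prob_SeedPi)

lemma Xtr_eq: "Xtr = PiM {..<n} Rf" unfolding Xtr_def by (rule PiM_cong) (auto simp: Rf_def)

lemma Rte_Rf: "j \<in> Jt \<Longrightarrow> Rte (j-n) = Rf j" by (auto simp: Jt_def Rf_def Rte_def)

lemma sh_meas: "sh \<in> measurable Xte (PiM Jt Rf)"
  unfolding sh_def Xte_def
proof (rule measurable_restrict)
  fix j assume j: "j \<in> Jt"
  hence "j - n < m" by (auto simp: Jt_def)
  hence "(\<lambda>y. y (j-n)) \<in> measurable (PiM {..<m} Rte) (Rte (j-n))" by simp
  thus "(\<lambda>y. y (j-n)) \<in> measurable (PiM {..<m} Rte) (Rf j)" using Rte_Rf[OF j] by simp
qed

lemma Xte_shift: "distr Xte (PiM Jt Rf) sh = PiM Jt Rf"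
proof -
  have "distr (PiM {..<m} Rte) (PiM Jt (\<lambda>j. Rte (j-n))) (\<lambda>\<omega>. \<lambda>j\<in>Jt. \<omega> (j-n)) = PiM Jt (\<lambda>j. Rte (j-n))"
    by (rule distr_PiM_reindex) (auto simp: Rte_prob inj_on_def Jt_def)
  moreover have "PiM Jt (\<lambda>j. Rte (j-n)) = PiM Jt Rf" by (rule PiM_cong) (auto simp: Rte_Rf)
  ultimately show ?thesis by (simp add: Xte_def sh_def)
qed

interpretation Rps: product_sigma_finite Rf
  unfolding product_sigma_finite_def using Rf_ps prob_space_imp_sigma_finite by blast

lemma Tset_split: "Tset = {..<n} \<union> Jt" by (auto simp: Tset_def Jt_def)

lemma mrg_eq: "x \<in> space (Xtr \<Otimes>\<^sub>M Xte) \<Longrightarrow> mrg x = merge {..<n} Jt ((\<lambda>(a,b). (a, sh b)) x)"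
  by (auto simp: mrg_def merge_def sh_def Tset_def Jt_def fun_eq_iff split: prod.splits)

lemma idsh_meas: "(\<lambda>(a,b). (a, sh b)) \<in> measurable (Xtr \<Otimes>\<^sub>M Xte) (PiM {..<n} Rf \<Otimes>\<^sub>M PiM Jt Rf)"
  using sh_meas unfolding Xtr_eq by measurable

lemma mrg_meas: "mrg \<in> measurable (Xtr \<Otimes>\<^sub>M Xte) Xm"
proof -
  have "(\<lambda>x. merge {..<n} Jt ((\<lambda>(a,b). (a, sh b)) x)) \<in> measurable (Xtr \<Otimes>\<^sub>M Xte) Xm"
    unfolding Xm_def Tset_split
    using measurable_comp[OF idsh_meas measurable_merge] by (simp add: o_def)
  thus ?thesis by (rule measurable_cong[THEN iffD1, rotated]) (simp add: mrg_eq)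
qed

lemma X_split: "distr (Xtr \<Otimes>\<^sub>M Xte) Xm mrg = Xm"
proof -
  have "distr (Xtr \<Otimes>\<^sub>M Xte) (PiM {..<n} Rf \<Otimes>\<^sub>M PiM Jt Rf) (\<lambda>(a,b). (a, sh b))
      = distr Xtr (PiM {..<n} Rf) (\<lambda>a. a) \<Otimes>\<^sub>M distr Xte (PiM Jt Rf) sh"
    by (rule pair_measure_distr[symmetric]) (use sh_meas Xte_shift in
        \<open>auto simp: Xtr_eq intro!: prob_space_imp_sigma_finite prob_space_PiM Rf_ps\<close>)
  also have "\<dots> = PiM {..<n} Rf \<Otimes>\<^sub>M PiM Jt Rf"
    by (simp add: Xte_shift distr_id2 Xtr_eq)
  finally have 1: "distr (Xtr \<Otimes>\<^sub>M Xte) (PiM {..<n} Rf \<Otimes>\<^sub>M PiM Jt Rf) (\<lambda>(a,b). (a, sh b))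
      = PiM {..<n} Rf \<Otimes>\<^sub>M PiM Jt Rf" .
  have "distr (Xtr \<Otimes>\<^sub>M Xte) Xm mrg = distr (Xtr \<Otimes>\<^sub>M Xte) Xm (merge {..<n} Jt \<circ> (\<lambda>(a,b). (a, sh b)))"
    by (rule distr_cong) (auto simp: mrg_eq)
  also have "\<dots> = distr (distr (Xtr \<Otimes>\<^sub>M Xte) (PiM {..<n} Rf \<Otimes>\<^sub>M PiM Jt Rf) (\<lambda>(a,b). (a, sh b))) Xm (merge {..<n} Jt)"
    by (rule distr_distr[symmetric]) (use idsh_meas in \<open>auto simp: Xm_def Tset_split\<close>)
  also have "\<dots> = Xm"
    unfolding 1 Xm_def Tset_split by (rule Rps.distr_merge) (auto simp: Jt_def)
  finally show ?thesis .
qed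

end

lemma distr_pair_eq:
  assumes f: "f \<in> measurable M1 N1" and g: "g \<in> measurable M2 N2"
    and df: "distr M1 N1 f = N1" and dg: "distr M2 N2 g = N2" and sf: "sigma_finite_measure N2"
  shows "distr (M1 \<Otimes>\<^sub>M M2) (N1 \<Otimes>\<^sub>M N2) (\<lambda>(x,y). (f x, g y)) = N1 \<Otimes>\<^sub>M N2"
  using pair_measure_distr[OF f g] sf dg df by simp

lemma map_prod_meas:
  assumes f: "f \<in> measurable M1 N1" and g: "g \<in> measurable M2 N2"
  shows "(\<lambda>(x,y). (f x, g y)) \<in> measurable (M1 \<Otimes>\<^sub>M M2) (N1 \<Otimes>\<^sub>M N2)"
  using f g by measurable

context csf begin

lemma seeds_proj_meas: "B \<le> Bt \<Longrightarrow> (\<lambda>sd. \<lambda>b\<in>{..<B}. sd (k,b)) \<in> measurable SeedPi (SdM B)"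
  unfolding SeedPi_def SdM_def
  by (rule measurable_restrict) (use k in auto)

lemma seeds_proj: "B \<le> Bt \<Longrightarrow> distr SeedPi (SdM B) (\<lambda>sd. \<lambda>b\<in>{..<B}. sd (k,b)) = SdM B"
  unfolding SeedPi_def SdM_def
  by (rule distr_PiM_reindex) (use k S in \<open>auto simp: inj_on_def\<close>)

lemma seeds_re_meas: "f ` {..<B} \<subseteq> {..<Bt} \<Longrightarrow> (\<lambda>s. \<lambda>b\<in>{..<B}. s (f b)) \<in> measurable (SdM Bt) (SdM B)"
  unfolding SdM_def
  by (rule measurable_restrict) auto

lemma seeds_re: "inj_on f {..<B} \<Longrightarrow> f ` {..<B} \<subseteq> {..<Bt} \<Longrightarrow> distr (SdM Bt) (SdM B) (\<lambda>s. \<lambda>b\<in>{..<B}. s (f b)) = SdM B"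
  unfolding SdM_def
  by (rule distr_PiM_reindex) (use S in auto)

lemma X_swap_meas: "\<sigma> ` Tset \<subseteq> Tset \<Longrightarrow> (\<lambda>x. \<lambda>j\<in>Tset. x (\<sigma> j)) \<in> measurable Xm Xm"
  unfolding Xm_def
proof (rule measurable_restrict)
  fix j assume "\<sigma> ` Tset \<subseteq> Tset" "j \<in> Tset"
  hence "(\<lambda>x. x (\<sigma> j)) \<in> measurable (PiM Tset Rf) (Rf (\<sigma> j))" by auto
  moreover have "sets (Rf (\<sigma> j)) = sets (Rf j)" by (simp add: Rf_sets)
  ultimately show "(\<lambda>x. x (\<sigma> j)) \<in> measurable (PiM Tset Rf) (Rf j)"
    using measurable_cong_sets[OF refl \<open>sets (Rf (\<sigma> j)) = sets (Rf j)\<close>, of "PiM Tset Rf"] by simp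
qed

lemma X_swap:
  assumes inj: "inj_on \<sigma> Tset" and im: "\<sigma> ` Tset \<subseteq> Tset" and R: "\<And>j. j \<in> Tset \<Longrightarrow> Rf (\<sigma> j) = Rf j"
  shows "distr Xm Xm (\<lambda>x. \<lambda>j\<in>Tset. x (\<sigma> j)) = Xm"
proof -
  have "distr (PiM Tset Rf) (PiM Tset (\<lambda>j. Rf (\<sigma> j))) (\<lambda>x. \<lambda>j\<in>Tset. x (\<sigma> j)) = PiM Tset (\<lambda>j. Rf (\<sigma> j))"
    by (rule distr_PiM_reindex) (use inj im Rf_ps in auto)
  moreover have "PiM Tset (\<lambda>j. Rf (\<sigma> j)) = PiM Tset Rf" by (rule PiM_cong) (auto simp: R)
  ultimately show ?thesis by (simp add: Xm_def)
qed

lemma sf_SdM: "sigma_finite_measure (SdM L)" by (rule prob_space_imp_sigma_finite[OF prob_SdM])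

lemma Om_transfer:
  assumes B: "B \<le> Bt"
  shows "distr Om (Xm \<Otimes>\<^sub>M SdM B) (\<lambda>(xx,sd). (mrg xx, \<lambda>b\<in>{..<B}. sd (k,b))) = Xm \<Otimes>\<^sub>M SdM B"
    and "(\<lambda>(xx,sd). (mrg xx, \<lambda>b\<in>{..<B}. sd (k,b))) \<in> measurable Om (Xm \<Otimes>\<^sub>M SdM B)"
  unfolding Om_def
  by (rule distr_pair_eq[OF mrg_meas seeds_proj_meas[OF B] X_split seeds_proj[OF B] sf_SdM],
      rule map_prod_meas[OF mrg_meas seeds_proj_meas[OF B]])

lemma XS_reseed:
  assumes "inj_on f {..<B}" "f ` {..<B} \<subseteq> {..<Bt}"
  shows "distr (Xm \<Otimes>\<^sub>M SdM Bt) (Xm \<Otimes>\<^sub>M SdM B) (\<lambda>(x,s). (x, \<lambda>b\<in>{..<B}. s (f b))) = Xm \<Otimes>\<^sub>M SdM B"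
    and "(\<lambda>(x,s). (x, \<lambda>b\<in>{..<B}. s (f b))) \<in> measurable (Xm \<Otimes>\<^sub>M SdM Bt) (Xm \<Otimes>\<^sub>M SdM B)"
proof -
  have d: "distr Xm Xm (\<lambda>x. x) = Xm" by (rule distr_id2) simp
  show "distr (Xm \<Otimes>\<^sub>M SdM Bt) (Xm \<Otimes>\<^sub>M SdM B) (\<lambda>(x,s). (x, \<lambda>b\<in>{..<B}. s (f b))) = Xm \<Otimes>\<^sub>M SdM B"
    by (rule distr_pair_eq[OF measurable_id seeds_re_meas[OF assms(2)] d seeds_re[OF assms] sf_SdM])
  show "(\<lambda>(x,s). (x, \<lambda>b\<in>{..<B}. s (f b))) \<in> measurable (Xm \<Otimes>\<^sub>M SdM Bt) (Xm \<Otimes>\<^sub>M SdM B)"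
    by (rule map_prod_meas[OF measurable_id seeds_re_meas[OF assms(2)]])
qed

lemma XS_swap:
  assumes "inj_on \<sigma> Tset" "\<sigma> ` Tset \<subseteq> Tset" "\<And>j. j \<in> Tset \<Longrightarrow> Rf (\<sigma> j) = Rf j"
  shows "distr (Xm \<Otimes>\<^sub>M SdM L) (Xm \<Otimes>\<^sub>M SdM L) (\<lambda>(x,s). (\<lambda>j\<in>Tset. x (\<sigma> j), s)) = Xm \<Otimes>\<^sub>M SdM L"
    and "(\<lambda>(x,s). (\<lambda>j\<in>Tset. x (\<sigma> j), s)) \<in> measurable (Xm \<Otimes>\<^sub>M SdM L) (Xm \<Otimes>\<^sub>M SdM L)"
proof -
  have d: "distr (SdM L) (SdM L) (\<lambda>x. x) = SdM L" by (rule distr_id2) simp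
  have sw: "distr Xm Xm (\<lambda>x. \<lambda>j\<in>Tset. x (\<sigma> j)) = Xm" by (rule X_swap) (use assms in auto)
  show "distr (Xm \<Otimes>\<^sub>M SdM L) (Xm \<Otimes>\<^sub>M SdM L) (\<lambda>(x,s). (\<lambda>j\<in>Tset. x (\<sigma> j), s)) = Xm \<Otimes>\<^sub>M SdM L"
    by (rule distr_pair_eq[OF X_swap_meas[OF assms(2)] measurable_id sw d sf_SdM])
  show "(\<lambda>(x,s). (\<lambda>j\<in>Tset. x (\<sigma> j), s)) \<in> measurable (Xm \<Otimes>\<^sub>M SdM L) (Xm \<Otimes>\<^sub>M SdM L)"
    by (rule map_prod_meas[OF X_swap_meas[OF assms(2)] measurable_id])
qed

end

context csf begin

definition "qq = (1 - 1 / (real nk + 1)) ^ nk"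
definition "blz z = (case z of (B,tb,eb,ob) \<Rightarrow> map (\<lambda>b. (tb b, eb b, ob b)) [0..<B])"
definition "CR = class_rand n m \<gamma> ytr Bt k"

lemma CR_eq: "CR = do {B \<leftarrow> binomial_pmf Bt qq;
    tb \<leftarrow> Pi_pmf {..<B} undefined (\<lambda>b. TB Cl);
    eb \<leftarrow> Pi_pmf {..<B} undefined (\<lambda>b. EB);
    ob \<leftarrow> Pi_pmf {..<B} undefined (\<lambda>b. OB);
    return_pmf (B, tb, eb, ob)}"
  unfolding CR_def class_rand_def Let_def qq_def nk_def so_def TB_def EB_def OB_def Cl_def Oth_def ..

lemma qq_pos: "0 < qq" "qq \<le> 1"
proof -
  have b: "0 \<le> 1 - 1 / (real nk + 1)" "1 - 1 / (real nk + 1) \<le> 1" by (auto simp: field_simps)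
  show "qq \<le> 1" unfolding qq_def by (rule power_le_one[OF b])
  show "0 < qq"
  proof (cases "nk = 0")
    case True thus ?thesis by (simp add: qq_def)
  next
    case False
    hence "0 < 1 - 1 / (real nk + 1)" by (auto simp: field_simps)
    thus ?thesis unfolding qq_def by simp
  qed
qed

lemma map_CR: "map_pmf blz CR = binomial_pmf Bt qq \<bind> (\<lambda>B. replicate_pmf B (bag Cl))"
proof -
  have "map_pmf blz CR = binomial_pmf Bt qq \<bind> (\<lambda>B.
      map_pmf (\<lambda>h. map h [0..<B]) (do {tb \<leftarrow> Pi_pmf {..<B} undefined (\<lambda>b. TB Cl);
         eo \<leftarrow> do {eb \<leftarrow> Pi_pmf {..<B} undefined (\<lambda>b. EB); ob \<leftarrow> Pi_pmf {..<B} undefined (\<lambda>b. OB);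
                    return_pmf (\<lambda>b. (eb b, ob b))};
         return_pmf (\<lambda>b. (tb b, eo b))}))"
    unfolding CR_eq by (simp add: map_bind_pmf bind_assoc_pmf bind_return_pmf blz_def)
  also have "\<dots> = binomial_pmf Bt qq \<bind> (\<lambda>B. replicate_pmf B (bag Cl))"
    unfolding Pi_pmf_pair[OF finite_lessThan] Pi_pmf_list bag_def ..
  finally show ?thesis .
qed

lemma prob_TB: "measure_pmf.prob (TB Aset) {tb. Pn (tb, e)} = qq"
proof -
  have "{tb. Pn (tb, e)} = Pi {..<nk} (\<lambda>_. - {n+i})" by (force simp: Pn_def)
  hence "measure_pmf.prob (TB Aset) {tb. Pn (tb, e)} = (\<Prod>p\<in>{..<nk}. measure_pmf.prob (pmf_of_set Aset) (- {n+i}))"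
    unfolding TB_def by (simp add: measure_Pi_pmf_Pi)
  also have "measure_pmf.prob (pmf_of_set Aset) (- {n+i}) = real nk / (real nk + 1)"
  proof -
    have "Aset \<inter> - {n+i} = Cl" by (auto simp: Aset_def)
    thus ?thesis by (simp add: measure_pmf_of_set card_Aset nk_def)
  qed
  also have "real nk / (real nk + 1) = 1 - 1 / (real nk + 1)" by (simp add: field_simps)
  finally show ?thesis by (simp add: qq_def)
qed

end

context csf begin

definition "EE = {tb. n + i \<notin> tb ` {..<nk}}"

lemma Pn_EE: "Pn bg = (fst bg \<in> EE)" by (simp add: Pn_def EE_def)

lemma prob_EE: "measure_pmf.prob (TB Aset) EE = qq"
  using prob_TB[of undefined] by (simp add: Pn_def EE_def)

lemma cond_TB:
  assumes nk0: "0 < nk"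
  shows "cond_pmf (TB Aset) EE = TB Cl"
proof (rule pmf_eqI)
  fix f :: "nat \<Rightarrow> nat"
  have ne: "set_pmf (TB Aset) \<inter> EE \<noteq> {}"
    using prob_EE qq_pos by (metis measure_pmf_zero_iff order_less_irrefl)
  have Cne: "Cl \<noteq> {}" using nk0 by (auto simp: nk_def)
  have pA: "pmf (pmf_of_set Aset) x = indicator Aset x / real (nk+1)" for x by (simp add: card_Aset)
  have pC: "pmf (pmf_of_set Cl) x = indicator Cl x / real nk" for x using Cne by (simp add: nk_def)
  have qqne: "qq = (real nk / (real nk + 1)) ^ nk"
    unfolding qq_def by (simp add: field_simps)
  show "pmf (cond_pmf (TB Aset) EE) f = pmf (TB Cl) f"
  proof (cases "\<forall>p. p \<notin> {..<nk} \<longrightarrow> f p = undefined")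
    case dflt: True
    show ?thesis
    proof (cases "f \<in> EE")
      case True
      have eqi: "indicator Aset (f p) = (indicator Cl (f p) :: real)" if "p < nk" for p
      proof -
        have "n + i \<notin> f ` {..<nk}" using True by (simp add: EE_def)
        hence "f p \<noteq> n + i" using that by (metis imageI lessThan_iff)
        thus ?thesis by (auto simp: Aset_def indicator_def)
      qed
      have "pmf (TB Aset) f = (\<Prod>p<nk. indicator Cl (f p) / real (nk+1))"
        unfolding TB_def using dflt by (simp add: pmf_Pi pA eqi)
      also have "\<dots> = (\<Prod>p<nk. (indicator Cl (f p) / real nk) * (real nk / (real nk + 1)))"
      proof (intro prod.cong refl)
        fix p
        have h1: "real nk > 0" using nk0 by simp
        show "indicator Cl (f p) / real (nk+1) = (indicator Cl (f p) / real nk) * (real nk / (real nk + 1))"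
        proof -
          have "(indicator Cl (f p) / real nk) * (real nk / (real nk + 1)) = indicator Cl (f p) * (real nk / real nk) / (real nk + 1)"
            by simp
          also have "real nk / real nk = 1" using h1 by simp
          finally show ?thesis by simp
        qed
      qed
      also have "\<dots> = (\<Prod>p<nk. indicator Cl (f p) / real nk) * qq"
        unfolding prod.distrib qqne prod_constant by simp
      finally have "pmf (TB Aset) f = (\<Prod>p<nk. indicator Cl (f p) / real nk) * qq" .
      moreover have "pmf (TB Cl) f = (\<Prod>p<nk. indicator Cl (f p) / real nk)"
        unfolding TB_def using dflt by (simp add: pmf_Pi pC)
      ultimately show ?thesis using True ne qq_pos by (simp add: pmf_cond prob_EE)
    next
      case False
      then obtain p where p: "p < nk" "f p = n + i" by (auto simp: EE_def)
      have "pmf (TB Cl) f = 0"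
      proof -
        have "indicator Cl (f p) = (0::real)" using p by (simp add: indicator_def)
        hence "(\<Prod>p<nk. pmf (pmf_of_set Cl) (f p)) = 0" using p
          by (intro prod_zero[OF finite_lessThan] bexI[of _ p]) (simp_all add: pC)
        thus ?thesis unfolding TB_def using dflt by (simp add: pmf_Pi)
      qed
      thus ?thesis using False ne by (simp add: pmf_cond)
    qed
  next
    case False
    hence "pmf (TB Cl) f = 0" "pmf (TB Aset) f = 0" unfolding TB_def by (auto simp: pmf_Pi)
    thus ?thesis using ne by (simp add: pmf_cond)
  qed
qed

lemma bern1: "bernoulli_pmf 1 = return_pmf True"
  by (rule pmf_eqI) (auto simp: indicator_def)

lemma pair_bind_left: "pair_pmf (A \<bind> g) R = A \<bind> (\<lambda>b. pair_pmf (g b) R)"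
  by (simp add: pair_pmf_def bind_assoc_pmf)

lemma bagA_decomp: "\<exists>d0. bag Aset = bernoulli_pmf qq \<bind> (\<lambda>b. if b then bag Cl else d0)
    \<and> (qq < 1 \<longrightarrow> (\<forall>x\<in>set_pmf d0. \<not> Pn x))"
proof (cases "nk = 0")
  case True
  have "TB Aset = TB Cl" by (simp add: TB_def True)
  moreover have "qq = 1" by (simp add: qq_def True)
  ultimately show ?thesis by (intro exI[of _ "bag Cl"]) (simp add: bern1 bind_return_pmf bag_def)
next
  case False
  hence nk0: "0 < nk" by simp
  have "real nk / (real nk + 1) < 1" by simp
  hence "(real nk / (real nk + 1)) ^ nk < 1"
    using nk0 by (subst power_less_one_iff) auto
  hence q1: "qq < 1" unfolding qq_def by (simp add: field_simps)
  have "TB Aset = bernoulli_pmf qq \<bind> (\<lambda>b. if b then cond_pmf (TB Aset) EE else cond_pmf (TB Aset) (- EE))"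
    using bernoulli_cond_decomp[of "TB Aset" EE] prob_EE qq_pos q1 by simp
  also have "\<dots> = bernoulli_pmf qq \<bind> (\<lambda>b. if b then TB Cl else cond_pmf (TB Aset) (- EE))"
    unfolding cond_TB[OF nk0] ..
  finally have tb: "TB Aset = \<dots>" .
  define d0 where "d0 = pair_pmf (cond_pmf (TB Aset) (- EE)) (pair_pmf EB OB)"
  have "bag Aset = bernoulli_pmf qq \<bind> (\<lambda>b. if b then bag Cl else d0)"
    unfolding bag_def d0_def
    by (subst tb, subst pair_bind_left) (intro bind_pmf_cong refl, simp)
  moreover have "\<forall>x\<in>set_pmf d0. \<not> Pn x"
  proof
    fix x assume "x \<in> set_pmf d0"
    hence "fst x \<in> set_pmf (cond_pmf (TB Aset) (- EE))" by (auto simp: d0_def)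
    moreover have "set_pmf (TB Aset) \<inter> - EE \<noteq> {}"
    proof
      assume "set_pmf (TB Aset) \<inter> - EE = {}"
      hence "measure_pmf.prob (TB Aset) (-EE) = 0" by (simp add: measure_pmf_zero_iff)
      moreover have "measure_pmf.prob (TB Aset) (-EE) = 1 - measure_pmf.prob (TB Aset) EE"
        using measure_pmf.prob_compl[of EE "TB Aset"] by (simp add: Compl_eq_Diff_UNIV)
      ultimately show False using prob_EE q1 by simp
    qed
    ultimately show "\<not> Pn x" by (simp add: Pn_EE)
  qed
  ultimately show ?thesis by blast
qed

lemma filter_bagA: "map_pmf (filter Pn) (replicate_pmf Bt (bag Aset)) = map_pmf blz CR"
proof -
  obtain d0 where d: "bag Aset = bernoulli_pmf qq \<bind> (\<lambda>b. if b then bag Cl else d0)"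
      and d0: "qq < 1 \<longrightarrow> (\<forall>x\<in>set_pmf d0. \<not> Pn x)"
    using bagA_decomp by blast
  have "map_pmf (filter Pn) (replicate_pmf Bt (bag Aset)) = binomial_pmf Bt qq \<bind> (\<lambda>B. replicate_pmf B (bag Cl))"
    by (rule filter_replicate_pmf[OF d]) (use qq_pos d0 valid_bagC in auto)
  thus ?thesis by (simp add: map_CR)
qed

end

context csf begin

lemma CR_support:
  assumes z: "z \<in> set_pmf CR"
  shows "length (blz z) \<le> Bt" "\<And>bg. bg \<in> set (blz z) \<Longrightarrow> bg \<in> set_pmf (bag Cl)"
proof -
  have "blz z \<in> set_pmf (map_pmf blz CR)" using z by simp
  hence "blz z \<in> set_pmf (binomial_pmf Bt qq \<bind> (\<lambda>B. replicate_pmf B (bag Cl)))" by (simp add: map_CR)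
  then obtain B where B: "B \<in> set_pmf (binomial_pmf Bt qq)" "blz z \<in> set_pmf (replicate_pmf B (bag Cl))"
    by auto
  have "B \<le> Bt" using B(1) qq_pos by (auto simp: set_pmf_binomial_eq split: if_splits)
  thus "length (blz z) \<le> Bt" using B(2) by (simp add: set_replicate_pmf)
  show "\<And>bg. bg \<in> set (blz z) \<Longrightarrow> bg \<in> set_pmf (bag Cl)" using B(2) by (auto simp: set_replicate_pmf)
qed

lemma blz_simps: "blz (B,tb,eb,ob) = map (\<lambda>b. (tb b, eb b, ob b)) [0..<B]" by (simp add: blz_def)

lemma score_Fail:
  assumes z: "z \<in> set_pmf CR" and zz: "z = (B,tb,eb,ob)" and r: "r k = z"
    and x: "x = (\<lambda>j\<in>Tset. if j < n then xtr j else xte (j-n))"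
  shows "(\<alpha> \<le> cs_score fit n m \<gamma> ytr xtr xte r sd i k) \<longleftrightarrow> \<not> Fail (blz z) (n+i) x (\<lambda>b\<in>{..<B}. sd (k,b))"
proof -
  have bz: "blz z = map (\<lambda>b. (tb b, eb b, ob b)) [0..<B]" by (simp add: zz blz_simps)
  have sb: "(tb b, eb b, ob b) \<in> set_pmf (bag Cl)" if "b < B" for b
    using CR_support(2)[OF z] that by (simp add: bz)
  have tbC: "tb b p \<in> Cl" if "b < B" "p < nk" for b p
  proof -
    have "valid (tb b, eb b, ob b)" "Pn (tb b, eb b, ob b)" using valid_bagC[OF sb[OF that(1)]] by auto
    hence "tb b p \<in> insert (n+i) Cl" "n + i \<notin> tb b ` {..<nk}" using that(2) by (auto simp: valid_def Pn_def Aset_def)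
    moreover have "tb b p \<in> tb b ` {..<nk}" using that(2) by simp
    ultimately have "tb b p \<noteq> n + i" by force
    with \<open>tb b p \<in> insert (n+i) Cl\<close> show ?thesis by simp
  qed
  have ebm: "eb b p < m" if "b < B" "p < m" for b p
    using valid_bagC[OF sb[OF that(1)]] that(2) by (auto simp: valid_def)
  have obO: "ob b p \<in> Oth" if "b < B" "p < so" for b p
    using valid_bagC[OF sb[OF that(1)]] that(2) by (auto simp: valid_def)
  define s where "s = (\<lambda>b\<in>{..<B}. sd (k,b))"
  define fh where "fh = (\<lambda>i' u. (\<Sum>b\<in>{b. b < B \<and> i \<notin> eb b ` {..<m} \<and> i' \<notin> tb b ` {..<nk}}.
        fit (fit_data xtr xte ytr nk m so k tb eb ob b) (sd (k, b)) k u) /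
        real (card {b. b < B \<and> i \<notin> eb b ` {..<m} \<and> i' \<notin> tb b ` {..<nk}}))"
  have cs: "cs_score fit n m \<gamma> ytr xtr xte r sd i k = (1 + real (card {i' \<in> Cl. fh i' (xte i) \<ge> fh i' (xtr i')})) / (real nk + 1)"
    unfolding cs_score_def Let_def r zz fh_def nk_def so_def Cl_def by simp
  have J: "Jset (blz z) (n+i) b' = {b. b < B \<and> i \<notin> eb b ` {..<m} \<and> b' \<notin> tb b ` {..<nk}}" for b'
  proof -
    have nn: "n + i \<notin> tb b ` {..<nk}" if "b < B" for b
    proof
      assume "n + i \<in> tb b ` {..<nk}"
      then obtain p where "p < nk" "tb b p = n + i" by auto
      with tbC[OF that \<open>p < nk\<close>] show False by simp
    qed
    show ?thesis
    proof (rule set_eqI)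
      fix j
      show "j \<in> Jset (blz z) (n+i) b' \<longleftrightarrow> j \<in> {b. b < B \<and> i \<notin> eb b ` {..<m} \<and> b' \<notin> tb b ` {..<nk}}"
      proof (cases "j < B")
        case True
        have "blz z ! j = (tb j, eb j, ob j)" using True by (simp add: bz)
        thus ?thesis using True nn[OF True] by (simp add: Jset_def bz) blast
      next
        case False thus ?thesis by (simp add: Jset_def bz)
      qed
    qed
  qed
  have D: "Dat x (blz z ! b) = fit_data xtr xte ytr nk m so k tb eb ob b" if "b < B" for b
  proof -
    have L1: "map (\<lambda>p. (x (tb b p), Some k)) [0..<nk] = map (\<lambda>p. (xtr (tb b p), Some k)) [0..<nk]"
      using tbC[OF that] Cl_sub by (intro map_cong refl) (auto simp: x Tset_def)
    have L2: "map (\<lambda>p. (x (n + eb b p), None)) [0..<m] = map (\<lambda>p. (xte (eb b p), None)) [0..<m]"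
      using ebm[OF that] by (intro map_cong refl) (auto simp: x Tset_def)
    have L3: "map (\<lambda>p. (x (ob b p), Some (ytr (ob b p)))) [0..<so] = map (\<lambda>p. (xtr (ob b p), Some (ytr (ob b p)))) [0..<so]"
      using obO[OF that] Oth_sub by (intro map_cong refl) (auto simp: x Tset_def)
    have "blz z ! b = (tb b, eb b, ob b)" using that by (simp add: bz)
    thus ?thesis unfolding Dat_def fit_data_def by (simp only: L1 L2 L3 prod.case)
  qed
  have F: "Fh (blz z) (n+i) b' x s u = fh b' u" for b' u
  proof -
    have "(\<Sum>j\<in>Jset (blz z) (n+i) b'. fit (Dat x (blz z ! j)) (s j) k u)
        = (\<Sum>b\<in>{b. b < B \<and> i \<notin> eb b ` {..<m} \<and> b' \<notin> tb b ` {..<nk}}. fit (fit_data xtr xte ytr nk m so k tb eb ob b) (sd (k, b)) k u)"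
      unfolding J by (intro sum.cong refl) (auto simp: D s_def)
    thus ?thesis unfolding Fh_def fh_def J by simp
  qed
  have xi: "x (n+i) = xte i" using i by (simp add: x Tset_def)
  have xb: "x b' = xtr b'" if "b' \<in> Cl" for b' using that Cl_sub by (auto simp: x Tset_def)
  have Am: "Aset - {n+i} = Cl" by (auto simp: Aset_def)
  have cc: "{b \<in> Aset - {n+i}. Fh (blz z) (n+i) b x s (x b) \<le> Fh (blz z) (n+i) b x s (x (n+i))}
      = {i' \<in> Cl. fh i' (xte i) \<ge> fh i' (xtr i')}"
    unfolding Am F xi using xb by auto
  show ?thesis
    unfolding cs Fail_def s_def[symmetric] cc by (simp add: field_simps not_less)
qed

end

lemma filter_nth: "filter P xs = map (nth xs) (filter (\<lambda>j. P (xs!j)) [0..<length xs])"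
proof (induction xs)
  case Nil then show ?case by simp
next
  case (Cons x xs)
  have u: "[0..<length (x#xs)] = 0 # map Suc [0..<length xs]"
    by (simp add: upt_conv_Cons map_Suc_upt del: upt_Suc)
  have f: "filter (\<lambda>j. P ((x#xs)!j)) (map Suc [0..<length xs]) = map Suc (filter (\<lambda>j. P (xs!j)) [0..<length xs])"
    by (simp add: filter_map o_def)
  show ?case unfolding u using Cons.IH f by (simp add: o_def)
qed

context csf begin

definition "idxf Ol = filter (\<lambda>j. Pn (Ol!j)) [0..<length Ol]"

lemma idxf_props: "distinct (idxf Ol)" "set (idxf Ol) = {j. j < length Ol \<and> Pn (Ol!j)}"
  "filter Pn Ol = map (nth Ol) (idxf Ol)"
  by (auto simp: idxf_def filter_nth[of Pn Ol])

lemma idxf_inj: "inj_on (nth (idxf Ol)) {..<length (idxf Ol)}"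
  using idxf_props(1)[of Ol] by (auto simp: inj_on_def nth_eq_iff_index_eq)

lemma idxf_range: "nth (idxf Ol) ` {..<length (idxf Ol)} \<subseteq> {..<length Ol}"
  using idxf_props(2) nth_mem by fastforce

lemma length_filter_idxf: "length (filter Pn Ol) = length (idxf Ol)"
  by (simp add: idxf_props(3))

lemma Fh_filter:
  "Fh (filter Pn Ol) (n+i) b' x (\<lambda>b\<in>{..<length (idxf Ol)}. s (idxf Ol ! b)) u = Fh Ol (n+i) b' x s u"
proof -
  define I where "I = idxf Ol"
  define Ol' where "Ol' = map (nth Ol) I"
  have Ol': "filter Pn Ol = Ol'" by (simp add: Ol'_def I_def idxf_props(3))
  have lOp: "length Ol' = length I" by (simp add: Ol'_def)
  have nthOp: "Ol' ! b = Ol ! (I ! b)" if "b < length I" for b using that by (simp add: Ol'_def)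
  have Ilt: "I ! b < length Ol" if "b < length I" for b using idxf_range[of Ol] that by (auto simp: I_def)
  have J: "Jset Ol (n+i) b' = nth I ` Jset Ol' (n+i) b'"
  proof (rule set_eqI)
    fix j
    show "j \<in> Jset Ol (n+i) b' \<longleftrightarrow> j \<in> nth I ` Jset Ol' (n+i) b'"
    proof
      assume j: "j \<in> Jset Ol (n+i) b'"
      hence "j \<in> set I" by (auto simp: Jset_def I_def idxf_props(2) Pn_def)
      then obtain b where b: "b < length I" "I ! b = j" by (auto simp: in_set_conv_nth)
      hence "b \<in> Jset Ol' (n+i) b'" using j by (auto simp: Jset_def lOp nthOp)
      thus "j \<in> nth I ` Jset Ol' (n+i) b'" using b by auto
    next
      assume "j \<in> nth I ` Jset Ol' (n+i) b'"
      then obtain b where b: "b \<in> Jset Ol' (n+i) b'" "j = I ! b" by auto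
      hence "b < length I" by (simp add: Jset_def lOp)
      thus "j \<in> Jset Ol (n+i) b'" using b Ilt by (auto simp: Jset_def nthOp)
    qed
  qed
  have inj: "inj_on (nth I) (Jset Ol' (n+i) b')"
    by (rule inj_on_subset[OF idxf_inj[of Ol, folded I_def]]) (auto simp: Jset_def lOp)
  have "(\<Sum>j\<in>Jset Ol (n+i) b'. fit (Dat x (Ol!j)) (s j) k u)
      = (\<Sum>b\<in>Jset Ol' (n+i) b'. fit (Dat x (Ol!(I!b))) (s (I!b)) k u)"
    unfolding J by (rule sum.reindex[OF inj, unfolded o_def])
  also have "\<dots> = (\<Sum>b\<in>Jset Ol' (n+i) b'. fit (Dat x (Ol'!b)) ((\<lambda>b\<in>{..<length I}. s (I ! b)) b) k u)"
    by (intro sum.cong refl) (auto simp: Jset_def lOp nthOp)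
  finally have sm: "(\<Sum>j\<in>Jset Ol (n+i) b'. fit (Dat x (Ol!j)) (s j) k u)
      = (\<Sum>b\<in>Jset Ol' (n+i) b'. fit (Dat x (Ol'!b)) ((\<lambda>b\<in>{..<length I}. s (I ! b)) b) k u)" .
  have cd: "card (Jset Ol (n+i) b') = card (Jset Ol' (n+i) b')" unfolding J by (rule card_image[OF inj])
  show ?thesis unfolding Fh_def Ol' sm cd I_def[symmetric] ..
qed

lemma Fail_filter:
  "Fail (filter Pn Ol) (n+i) x (\<lambda>b\<in>{..<length (idxf Ol)}. s (idxf Ol ! b)) = Fail Ol (n+i) x s"
  by (simp only: Fail_def Fh_filter)

definition "sw a j = (if j = a then n+i else if j = n+i then a else j)"
definition "act a bg = (\<lambda>p. if p < nk then sw a (fst bg p) else fst bg p, fst (snd bg), snd (snd bg))"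

lemma sw_sw[simp]: "sw a (sw a j) = j" by (auto simp: sw_def)
lemma sw_inj: "inj (sw a)" by (metis injI sw_sw)
lemma sw_a[simp]: "sw a a = n+i" by (simp add: sw_def)
lemma sw_Aset: "a \<in> Aset \<Longrightarrow> sw a ` Aset = Aset"
proof
  assume a: "a \<in> Aset"
  show "sw a ` Aset \<subseteq> Aset" using a by (auto simp: sw_def)
  show "Aset \<subseteq> sw a ` Aset"
  proof
    fix j assume "j \<in> Aset"
    hence "sw a j \<in> Aset" using a by (auto simp: sw_def)
    thus "j \<in> sw a ` Aset" by (metis imageI sw_sw)
  qed
qed
lemma sw_Tset: "a \<in> Tset \<Longrightarrow> j \<in> Tset \<Longrightarrow> sw a j \<in> Tset"
  using Aset_T by (auto simp: sw_def)

lemma Fh_swap: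
  assumes a: "a \<in> Cl" and vO: "\<And>bg. bg \<in> set Ol \<Longrightarrow> valid bg"
  shows "Fh (map (act a) Ol) (sw a c) (sw a d) (\<lambda>j\<in>Tset. x (sw a j)) s u = Fh Ol c d x s u"
proof -
  have aT: "a \<in> Tset" using a Aset_T by (auto simp: Aset_def)
  have aA: "a \<in> Aset" using a by (simp add: Aset_def)
  have an: "a < n" using a Cl_sub by auto
  have img: "fst (act a bg) ` {..<nk} = sw a ` (fst bg ` {..<nk})" for bg
    by (auto simp: act_def image_iff)
  have J: "Jset (map (act a) Ol) (sw a c) (sw a d) = Jset Ol c d"
    unfolding Jset_def
  proof (intro Collect_cong)
    fix j
    show "(j < length (map (act a) Ol) \<and> sw a c \<notin> fst (map (act a) Ol ! j) ` {..<nk} \<and>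
          sw a d \<notin> fst (map (act a) Ol ! j) ` {..<nk} \<and> i \<notin> fst (snd (map (act a) Ol ! j)) ` {..<m}) =
         (j < length Ol \<and> c \<notin> fst (Ol ! j) ` {..<nk} \<and> d \<notin> fst (Ol ! j) ` {..<nk} \<and> i \<notin> fst (snd (Ol ! j)) ` {..<m})"
    proof (cases "j < length Ol")
      case True
      have "fst (snd (act a (Ol ! j))) = fst (snd (Ol ! j))" by (simp add: act_def)
      thus ?thesis using True by (simp add: img inj_image_mem_iff[OF sw_inj])
    qed simp
  qed
  have D: "Dat (\<lambda>j\<in>Tset. x (sw a j)) (act a (Ol!j)) = Dat x (Ol!j)" if j: "j \<in> Jset Ol c d" for j
  proof -
    obtain tb eb ob where bg: "Ol!j = (tb,eb,ob)" by (cases "Ol!j") auto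
    have jl: "j < length Ol" using j by (simp add: Jset_def)
    have v: "valid (tb,eb,ob)" using vO[OF nth_mem[OF jl]] bg by simp
    have ei: "i \<notin> eb ` {..<m}" using j bg by (simp add: Jset_def)
    have L1: "map (\<lambda>p. ((\<lambda>j\<in>Tset. x (sw a j)) (if p < nk then sw a (tb p) else tb p), Some k)) [0..<nk]
        = map (\<lambda>p. (x (tb p), Some k)) [0..<nk]"
    proof (intro map_cong refl)
      fix p assume "p \<in> set [0..<nk]"
      hence "p < nk" by simp
      hence "tb p \<in> Tset" using v Aset_T by (auto simp: valid_def)
      thus "((\<lambda>j\<in>Tset. x (sw a j)) (if p < nk then sw a (tb p) else tb p), Some k) = (x (tb p), Some k)"
        using \<open>p < nk\<close> aT sw_Tset by simp
    qed
    have L2: "map (\<lambda>p. ((\<lambda>j\<in>Tset. x (sw a j)) (n + eb p), None)) [0..<m] = map (\<lambda>p. (x (n + eb p), None)) [0..<m]"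
    proof (intro map_cong refl)
      fix p assume "p \<in> set [0..<m]"
      hence p: "p < m" by simp
      hence "eb p < m" "eb p \<noteq> i" using v ei by (auto simp: valid_def)
      thus "((\<lambda>j\<in>Tset. x (sw a j)) (n + eb p), None) = (x (n + eb p), None)"
        using an by (simp add: Tset_def sw_def)
    qed
    have L3: "map (\<lambda>p. ((\<lambda>j\<in>Tset. x (sw a j)) (ob p), Some (ytr (ob p)))) [0..<so]
        = map (\<lambda>p. (x (ob p), Some (ytr (ob p)))) [0..<so]"
    proof (intro map_cong refl)
      fix p assume "p \<in> set [0..<so]"
      hence p: "p < so" by simp
      hence o: "ob p \<in> Oth" using v by (auto simp: valid_def)
      hence "ob p < n" "ob p \<noteq> a" using Oth_sub a Oth_eq by auto
      thus "((\<lambda>j\<in>Tset. x (sw a j)) (ob p), Some (ytr (ob p))) = (x (ob p), Some (ytr (ob p)))"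
        by (simp add: Tset_def sw_def)
    qed
    show ?thesis unfolding bg act_def Dat_def by (simp only: L1 L2 L3 prod.case fst_conv snd_conv)
  qed
  have "(\<Sum>j\<in>Jset Ol c d. fit (Dat (\<lambda>j\<in>Tset. x (sw a j)) (map (act a) Ol ! j)) (s j) k u)
      = (\<Sum>j\<in>Jset Ol c d. fit (Dat x (Ol ! j)) (s j) k u)"
    by (intro sum.cong refl) (auto simp: D Jset_def)
  thus ?thesis unfolding Fh_def J by simp
qed

lemma Collect_image: "{b \<in> f ` X. Pr b} = f ` {b \<in> X. Pr (f b)}" by auto

lemma Fail_swap:
  assumes a: "a \<in> Cl" and vO: "\<And>bg. bg \<in> set Ol \<Longrightarrow> valid bg"
  shows "Fail (map (act a) Ol) (n+i) (\<lambda>j\<in>Tset. x (sw a j)) s = Fail Ol a x s"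
proof -
  have aA: "a \<in> Aset" using a by (simp add: Aset_def)
  define x' where "x' = (\<lambda>j\<in>Tset. x (sw a j))"
  have xs: "x' (sw a c) = x c" if "c \<in> Aset" for c
    using that Aset_T sw_Tset[of a c] aA by (auto simp: x'_def)
  have xn: "x' (n+i) = x a" using xs[OF aA] by simp
  have im: "sw a ` (Aset - {a}) = Aset - {n+i}"
    by (simp add: image_set_diff[OF sw_inj] sw_Aset[OF aA])
  have F: "Fh (map (act a) Ol) (n+i) (sw a b) x' s u = Fh Ol a b x s u" for b u
    using Fh_swap[OF a vO, where c=a and d=b and x=x and s=s and u=u] by (simp add: x'_def)
  have "{b \<in> Aset - {n+i}. Fh (map (act a) Ol) (n+i) b x' s (x' b) \<le> Fh (map (act a) Ol) (n+i) b x' s (x' (n+i))}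
      = sw a ` {b \<in> Aset - {a}. Fh (map (act a) Ol) (n+i) (sw a b) x' s (x' (sw a b)) \<le> Fh (map (act a) Ol) (n+i) (sw a b) x' s (x' (n+i))}"
    unfolding im[symmetric] by (rule Collect_image)
  also have "{b \<in> Aset - {a}. Fh (map (act a) Ol) (n+i) (sw a b) x' s (x' (sw a b)) \<le> Fh (map (act a) Ol) (n+i) (sw a b) x' s (x' (n+i))}
      = {b \<in> Aset - {a}. Fh Ol a b x s (x b) \<le> Fh Ol a b x s (x a)}"
    by (intro Collect_cong conj_cong refl) (simp add: F xs xn)
  finally have eq: "{b \<in> Aset - {n+i}. Fh (map (act a) Ol) (n+i) b x' s (x' b) \<le> Fh (map (act a) Ol) (n+i) b x' s (x' (n+i))}
      = sw a ` {b \<in> Aset - {a}. Fh Ol a b x s (x b) \<le> Fh Ol a b x s (x a)}" .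
  have "card (sw a ` {b \<in> Aset - {a}. Fh Ol a b x s (x b) \<le> Fh Ol a b x s (x a)})
      = card {b \<in> Aset - {a}. Fh Ol a b x s (x b) \<le> Fh Ol a b x s (x a)}"
    by (rule card_image) (rule inj_on_subset[OF sw_inj], simp)
  thus ?thesis unfolding Fail_def x'_def[symmetric] eq by simp
qed

end

lemma Pi_pmf_map_if:
  assumes fin: "finite I"
  shows "map_pmf (\<lambda>h p. if p \<in> I then f (h p) else h p) (Pi_pmf I d D) = Pi_pmf I d (\<lambda>p. map_pmf f (D p))"
proof -
  have 1: "map_pmf (\<lambda>g x. if x \<in> I then g x else d) (Pi_pmf I (f d) (\<lambda>p. map_pmf f (D p))) = Pi_pmf I d (\<lambda>p. map_pmf f (D p))"
    using fin by (rule Pi_pmf_default_swap)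
  have 2: "Pi_pmf I (f d) (\<lambda>p. map_pmf f (D p)) = map_pmf (\<lambda>h. f \<circ> h) (Pi_pmf I d D)"
    using fin refl by (rule Pi_pmf_map)
  have 3: "map_pmf (\<lambda>g x. if x \<in> I then g x else d) (map_pmf (\<lambda>h. f \<circ> h) (Pi_pmf I d D))
      = map_pmf (\<lambda>h p. if p \<in> I then f (h p) else h p) (Pi_pmf I d D)"
    unfolding pmf.map_comp
  proof (rule map_pmf_cong[OF refl])
    fix h assume "h \<in> set_pmf (Pi_pmf I d D)"
    hence h: "x \<notin> I \<Longrightarrow> h x = d" for x using set_Pi_pmf_subset[OF fin, of d D] by auto
    show "((\<lambda>g x. if x \<in> I then g x else d) \<circ> (\<lambda>h. f \<circ> h)) h = (\<lambda>p. if p \<in> I then f (h p) else h p)"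
    proof
      fix p show "((\<lambda>g x. if x \<in> I then g x else d) \<circ> (\<lambda>h. f \<circ> h)) h p = (if p \<in> I then f (h p) else h p)"
        using h[of p] by simp
    qed
  qed
  have "Pi_pmf I d (\<lambda>p. map_pmf f (D p)) = map_pmf (\<lambda>h p. if p \<in> I then f (h p) else h p) (Pi_pmf I d D)"
    by (subst 1[symmetric], subst 2, rule 3)
  thus ?thesis by (rule sym)
qed

lemma pmf_exp_cong:
  "(\<And>x. x \<in> set_pmf p \<Longrightarrow> f x = g x) \<Longrightarrow> measure_pmf.expectation p f = measure_pmf.expectation p g"
  by (rule integral_cong_AE) (auto simp: AE_measure_pmf_iff)

lemma pmf_integrable_bound:
  fixes f :: "'a \<Rightarrow> real"
  shows "(\<And>x. x \<in> set_pmf p \<Longrightarrow> \<bar>f x\<bar> \<le> c) \<Longrightarrow> integrable (measure_pmf p) f"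
  by (rule measure_pmf.integrable_const_bound[where B=c]) (auto simp: AE_measure_pmf_iff)

context csf begin

lemma act_bag: assumes a: "a \<in> Aset" shows "map_pmf (act a) (bag Aset) = bag Aset"
proof -
  define tm where "tm = (\<lambda>h p. if p \<in> {..<nk} then sw a (h p) else (h p :: nat))"
  have act: "act a = (\<lambda>(x, y). (tm x, id y))"
    by (auto simp: act_def tm_def fun_eq_iff)
  have "map_pmf tm (TB Aset) = Pi_pmf {..<nk} undefined (\<lambda>p. map_pmf (sw a) (pmf_of_set Aset))"
    unfolding TB_def tm_def by (rule Pi_pmf_map_if) simp
  also have "map_pmf (sw a) (pmf_of_set Aset) = pmf_of_set Aset"
    using map_pmf_of_set_inj[of "sw a" Aset] sw_inj[of a] sw_Aset[OF a]
    by (simp add: inj_on_subset)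
  finally have "map_pmf tm (TB Aset) = TB Aset" by (simp add: TB_def)
  thus ?thesis unfolding bag_def act by (simp add: map_pair)
qed

lemma act_valid: assumes a: "a \<in> Aset" "valid bg" shows "valid (act a bg)"
  using assms sw_Aset[OF a(1)] by (auto simp: valid_def act_def)

lemma act_rep: assumes a: "a \<in> Aset" shows "map_pmf (map (act a)) (replicate_pmf Bt (bag Aset)) = replicate_pmf Bt (bag Aset)"
  by (simp add: map_replicate_pmf act_bag[OF a])

end

context csf begin

definition "MM L = Xm \<Otimes>\<^sub>M SdM L"
definition "FE bl a = {\<omega> \<in> space (MM (length bl)). Fail bl a (fst \<omega>) (snd \<omega>)}"
definition "Hm bl a = measure (MM (length bl)) (FE bl a)"
definition "RP = replicate_pmf Bt (bag Aset)"

lemma prob_MM: "prob_space (MM L)" unfolding MM_def by (intro prob_space_pair prob_Xm prob_SdM)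

lemma FE_meas:
  assumes "\<And>bg. bg \<in> set bl \<Longrightarrow> valid bg" "a \<in> Aset"
  shows "FE bl a \<in> sets (MM (length bl))"
  unfolding FE_def
proof (rule Fail_meas[OF assms])
  fix j assume j: "j \<in> Tset"
  have "(\<lambda>x. x j) \<in> measurable Xm (Rf j)" unfolding Xm_def using j by simp
  hence "(\<lambda>x. x j) \<in> measurable Xm MX" using measurable_cong_sets[OF refl Rf_sets[of j], of Xm] by simp
  thus "(\<lambda>\<omega>. fst \<omega> j) \<in> measurable (MM (length bl)) MX"
    unfolding MM_def by (rule measurable_compose[OF measurable_fst, unfolded comp_def])
next
  fix j assume j: "j < length bl"
  have "(\<lambda>x. x j) \<in> measurable (SdM (length bl)) S" unfolding SdM_def using j by simp
  thus "(\<lambda>\<omega>. snd \<omega> j) \<in> measurable (MM (length bl)) S"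
    unfolding MM_def by (rule measurable_compose[OF measurable_snd, unfolded comp_def])
qed

lemma RP_support: "Ol \<in> set_pmf RP \<Longrightarrow> length Ol = Bt \<and> (\<forall>bg\<in>set Ol. valid bg)"
  by (auto simp: RP_def set_replicate_pmf intro: valid_bagA)

lemma Hm_bounds: "0 \<le> Hm bl a" "Hm bl a \<le> 1"
  unfolding Hm_def using prob_space.prob_le_1[OF prob_MM] by auto

lemma stepD:
  assumes Ol: "Ol \<in> set_pmf RP"
  shows "Hm (filter Pn Ol) (n+i) = Hm Ol (n+i)"
proof -
  have lO: "length Ol = Bt" and vO: "\<And>bg. bg \<in> set Ol \<Longrightarrow> valid bg" using RP_support[OF Ol] by auto
  define B where "B = length (idxf Ol)"
  have lf: "length (filter Pn Ol) = B" by (simp add: B_def length_filter_idxf)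
  define Psi where "Psi = (\<lambda>(x::nat\<Rightarrow>'x,s::nat\<Rightarrow>'s). (x, \<lambda>b\<in>{..<B}. s (idxf Ol ! b)))"
  have inj: "inj_on (nth (idxf Ol)) {..<B}" unfolding B_def by (rule idxf_inj)
  have rng: "nth (idxf Ol) ` {..<B} \<subseteq> {..<Bt}" using idxf_range[of Ol] lO by (simp add: B_def)
  have dist: "distr (MM Bt) (MM B) Psi = MM B" and Pm: "Psi \<in> measurable (MM Bt) (MM B)"
    unfolding MM_def Psi_def using XS_reseed[OF inj rng] by auto
  have vf: "\<And>bg. bg \<in> set (filter Pn Ol) \<Longrightarrow> valid bg" using vO by auto
  have FEm0: "FE (filter Pn Ol) (n+i) \<in> sets (MM (length (filter Pn Ol)))"
    by (rule FE_meas) (use vO in auto)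
  hence FEm: "FE (filter Pn Ol) (n+i) \<in> sets (MM B)" using lf by simp
  have pre: "Psi -` FE (filter Pn Ol) (n+i) \<inter> space (MM Bt) = FE Ol (n+i)"
  proof (intro set_eqI iffI)
    fix \<omega> assume "\<omega> \<in> Psi -` FE (filter Pn Ol) (n+i) \<inter> space (MM Bt)"
    hence "\<omega> \<in> space (MM Bt)" "Fail (filter Pn Ol) (n+i) (fst \<omega>) (\<lambda>b\<in>{..<length (idxf Ol)}. snd \<omega> (idxf Ol ! b))"
      by (auto simp: FE_def Psi_def B_def split: prod.splits)
    thus "\<omega> \<in> FE Ol (n+i)" by (simp add: Fail_filter FE_def lO)
  next
    fix \<omega> assume w: "\<omega> \<in> FE Ol (n+i)"
    hence sp: "\<omega> \<in> space (MM Bt)" by (simp add: FE_def lO)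
    hence "Psi \<omega> \<in> space (MM B)" using Pm by (simp add: measurable_space)
    moreover have "Fail (filter Pn Ol) (n+i) (fst \<omega>) (\<lambda>b\<in>{..<length (idxf Ol)}. snd \<omega> (idxf Ol ! b))"
      using w by (simp add: Fail_filter FE_def)
    ultimately show "\<omega> \<in> Psi -` FE (filter Pn Ol) (n+i) \<inter> space (MM Bt)"
      using sp by (auto simp: FE_def Psi_def B_def lf split: prod.splits)
  qed
  have "Hm (filter Pn Ol) (n+i) = measure (distr (MM Bt) (MM B) Psi) (FE (filter Pn Ol) (n+i))"
    by (simp add: Hm_def lf dist)
  also have "\<dots> = measure (MM Bt) (FE Ol (n+i))"
    by (simp add: measure_distr[OF Pm FEm] pre)
  finally show ?thesis by (simp add: Hm_def lO)
qed

end

context csf begin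

lemma sw_props:
  assumes a: "a \<in> Cl"
  shows "inj_on (sw a) Tset" "sw a ` Tset \<subseteq> Tset" "\<And>j. j \<in> Tset \<Longrightarrow> Rf (sw a j) = Rf j"
proof -
  have aT: "a \<in> Tset" using a Aset_T by (auto simp: Aset_def)
  show "inj_on (sw a) Tset" by (rule inj_on_subset[OF sw_inj]) simp
  show "sw a ` Tset \<subseteq> Tset" using sw_Tset[OF aT] by auto
  have an: "a < n" using a Cl_sub by auto
  have Ra: "Rf a = P k" using an Cl_k[OF a] by (simp add: Rf_def)
  have Rn: "Rf (n+i) = P k" using i yk k by (simp add: Rf_def)
  fix j assume "j \<in> Tset"
  show "Rf (sw a j) = Rf j" using Ra Rn by (auto simp: sw_def)
qed

lemma stepE1:
  assumes Ol: "Ol \<in> set_pmf RP" and a: "a \<in> Cl"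
  shows "Hm Ol a = Hm (map (act a) Ol) (n+i)"
proof -
  have lO: "length Ol = Bt" and vO: "\<And>bg. bg \<in> set Ol \<Longrightarrow> valid bg" using RP_support[OF Ol] by auto
  have aA: "a \<in> Aset" using a by (simp add: Aset_def)
  define Phi where "Phi = (\<lambda>(x::nat\<Rightarrow>'x,s::nat\<Rightarrow>'s). (\<lambda>j\<in>Tset. x (sw a j), s))"
  have dist: "distr (MM Bt) (MM Bt) Phi = MM Bt" and Pm: "Phi \<in> measurable (MM Bt) (MM Bt)"
    unfolding MM_def Phi_def using XS_swap[OF sw_props[OF a]] by auto
  have vA: "\<And>bg. bg \<in> set (map (act a) Ol) \<Longrightarrow> valid bg" using vO act_valid[OF aA] by auto
  have FEm0: "FE (map (act a) Ol) (n+i) \<in> sets (MM (length (map (act a) Ol)))"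
    by (rule FE_meas[OF vA ni_Aset])
  hence FEm: "FE (map (act a) Ol) (n+i) \<in> sets (MM Bt)" using lO by simp
  have pre: "Phi -` FE (map (act a) Ol) (n+i) \<inter> space (MM Bt) = FE Ol a"
  proof (intro set_eqI iffI)
    fix \<omega> assume "\<omega> \<in> Phi -` FE (map (act a) Ol) (n+i) \<inter> space (MM Bt)"
    hence "\<omega> \<in> space (MM Bt)" "Fail (map (act a) Ol) (n+i) (\<lambda>j\<in>Tset. fst \<omega> (sw a j)) (snd \<omega>)"
      by (auto simp: FE_def Phi_def split: prod.splits)
    thus "\<omega> \<in> FE Ol a" by (simp add: Fail_swap[OF a vO] FE_def lO)
  next
    fix \<omega> assume w: "\<omega> \<in> FE Ol a"
    hence sp: "\<omega> \<in> space (MM Bt)" by (simp add: FE_def lO)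
    hence "Phi \<omega> \<in> space (MM Bt)" using Pm by (simp add: measurable_space)
    moreover have "Fail (map (act a) Ol) (n+i) (\<lambda>j\<in>Tset. fst \<omega> (sw a j)) (snd \<omega>)"
      using w by (simp add: Fail_swap[OF a vO] FE_def)
    ultimately show "\<omega> \<in> Phi -` FE (map (act a) Ol) (n+i) \<inter> space (MM Bt)"
      using sp by (auto simp: FE_def Phi_def lO split: prod.splits)
  qed
  have "Hm (map (act a) Ol) (n+i) = measure (distr (MM Bt) (MM Bt) Phi) (FE (map (act a) Ol) (n+i))"
    by (simp add: Hm_def lO dist)
  also have "\<dots> = measure (MM Bt) (FE Ol a)"
    by (simp add: measure_distr[OF Pm FEm] pre)
  finally show ?thesis by (simp add: Hm_def lO)
qed

lemma Hm_integrable: "integrable (measure_pmf p) (\<lambda>Ol. Hm (f Ol) a)"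
  by (rule pmf_integrable_bound[where c=1]) (use Hm_bounds in auto)

lemma stepE2:
  assumes a: "a \<in> Aset"
  shows "measure_pmf.expectation RP (\<lambda>Ol. Hm Ol a) = measure_pmf.expectation RP (\<lambda>Ol. Hm Ol (n+i))"
proof (cases "a = n+i")
  case False
  hence aC: "a \<in> Cl" using a by (simp add: Aset_def)
  have "measure_pmf.expectation RP (\<lambda>Ol. Hm Ol a) = measure_pmf.expectation RP (\<lambda>Ol. Hm (map (act a) Ol) (n+i))"
    by (rule pmf_exp_cong) (rule stepE1[OF _ aC])
  also have "\<dots> = measure_pmf.expectation (map_pmf (map (act a)) RP) (\<lambda>Ol. Hm Ol (n+i))"
    by simp
  also have "map_pmf (map (act a)) RP = RP" unfolding RP_def by (rule act_rep[OF a])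
  finally show ?thesis .
qed simp

lemma stepE3:
  assumes Ol: "Ol \<in> set_pmf RP"
  shows "(\<Sum>a\<in>Aset. Hm Ol a) \<le> 2 * \<alpha> * real (nk+1)"
proof -
  have vO: "\<And>bg. bg \<in> set Ol \<Longrightarrow> valid bg" using RP_support[OF Ol] by auto
  define L where "L = length Ol"
  interpret ps: prob_space "MM L" by (rule prob_MM)
  have meas: "FE Ol a \<in> sets (MM L)" if "a \<in> Aset" for a using FE_meas[OF vO that] by (simp add: L_def)
  have "(\<Sum>a\<in>Aset. Hm Ol a) = (\<Sum>a\<in>Aset. integral\<^sup>L (MM L) (indicator (FE Ol a)))"
    using meas by (intro sum.cong refl) (simp add: Hm_def L_def Int_absorb2 sets.sets_into_space)
  also have "\<dots> = integral\<^sup>L (MM L) (\<lambda>\<omega>. \<Sum>a\<in>Aset. indicator (FE Ol a) \<omega>)"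
  proof -
    have "integral\<^sup>L (MM L) (\<lambda>\<omega>. \<Sum>a\<in>Aset. indicator (FE Ol a) \<omega>) = (\<Sum>a\<in>Aset. integral\<^sup>L (MM L) (\<lambda>\<omega>. indicator (FE Ol a) \<omega> :: real))"
      by (rule Bochner_Integration.integral_sum) (use meas in \<open>auto intro!: integrable_real_indicator simp: ps.emeasure_eq_measure\<close>)
    thus ?thesis by simp
  qed
  also have "\<dots> \<le> integral\<^sup>L (MM L) (\<lambda>\<omega>. 2 * \<alpha> * real (nk+1))"
  proof (rule integral_mono)
    show "integrable (MM L) (\<lambda>\<omega>. \<Sum>a\<in>Aset. indicator (FE Ol a) \<omega> :: real)"
      using meas by (auto intro!: integrable_real_indicator simp: ps.emeasure_eq_measure)
    show "integrable (MM L) (\<lambda>\<omega>. 2 * \<alpha> * real (nk+1))" by simp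
    fix \<omega> assume "\<omega> \<in> space (MM L)"
    have "(\<Sum>a\<in>Aset. indicator (FE Ol a) \<omega> :: real) = (\<Sum>a\<in>Aset. if \<omega> \<in> FE Ol a then 1 else 0)"
      by (intro sum.cong refl) (simp add: indicator_def)
    also have "\<dots> = real (card {a\<in>Aset. \<omega> \<in> FE Ol a})" by (rule card_sum_if[symmetric, OF finite_Aset])
    also have "{a\<in>Aset. \<omega> \<in> FE Ol a} = {a\<in>Aset. Fail Ol a (fst \<omega>) (snd \<omega>)}"
      using \<open>\<omega> \<in> space (MM L)\<close> by (auto simp: FE_def L_def)
    also have "real (card \<dots>) \<le> 2 * \<alpha> * real (nk+1)" by (rule Fail_count)
    finally show "(\<Sum>a\<in>Aset. indicator (FE Ol a) \<omega> :: real) \<le> 2 * \<alpha> * real (nk+1)" .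
  qed
  also have "\<dots> = 2 * \<alpha> * real (nk+1)" by (simp add: ps.prob_space)
  finally show ?thesis .
qed

lemma stepE4: "measure_pmf.expectation RP (\<lambda>Ol. Hm Ol (n+i)) \<le> 2 * \<alpha>"
proof -
  have "real (nk+1) * measure_pmf.expectation RP (\<lambda>Ol. Hm Ol (n+i))
      = (\<Sum>a\<in>Aset. measure_pmf.expectation RP (\<lambda>Ol. Hm Ol a))"
  proof -
    have "(\<Sum>a\<in>Aset. measure_pmf.expectation RP (\<lambda>Ol. Hm Ol a)) = (\<Sum>a\<in>Aset. measure_pmf.expectation RP (\<lambda>Ol. Hm Ol (n+i)))"
      by (rule sum.cong[OF refl]) (rule stepE2)
    thus ?thesis by (simp add: card_Aset)
  qed
  also have "\<dots> = measure_pmf.expectation RP (\<lambda>Ol. \<Sum>a\<in>Aset. Hm Ol a)"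
  proof -
    have "measure_pmf.expectation RP (\<lambda>Ol. \<Sum>a\<in>Aset. Hm Ol a) = (\<Sum>a\<in>Aset. measure_pmf.expectation RP (\<lambda>Ol. Hm Ol a))"
      by (rule Bochner_Integration.integral_sum) (rule Hm_integrable[where f=id, unfolded id_def])
    thus ?thesis by simp
  qed
  also have "\<dots> \<le> measure_pmf.expectation RP (\<lambda>Ol. 2 * \<alpha> * real (nk+1))"
  proof (rule integral_mono_AE)
    show "integrable (measure_pmf RP) (\<lambda>Ol. \<Sum>a\<in>Aset. Hm Ol a)"
      by (rule Bochner_Integration.integrable_sum) (rule Hm_integrable[where f=id, unfolded id_def])
    show "integrable (measure_pmf RP) (\<lambda>Ol. 2 * \<alpha> * real (nk+1))" by simp
    show "AE Ol in measure_pmf RP. (\<Sum>a\<in>Aset. Hm Ol a) \<le> 2 * \<alpha> * real (nk+1)"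
      unfolding AE_measure_pmf_iff using stepE3 by blast
  qed
  also have "\<dots> = 2 * \<alpha> * real (nk+1)" by simp
  finally have "real (nk+1) * measure_pmf.expectation RP (\<lambda>Ol. Hm Ol (n+i)) \<le> real (nk+1) * (2 * \<alpha>)"
    by (simp add: algebra_simps)
  thus ?thesis by (simp add: mult_le_cancel_left_pos)
qed

end

context csf begin

lemma stepC: "measure_pmf.expectation CR (\<lambda>z. Hm (blz z) (n+i)) = measure_pmf.expectation RP (\<lambda>Ol. Hm Ol (n+i))"
proof -
  have "measure_pmf.expectation CR (\<lambda>z. Hm (blz z) (n+i)) = measure_pmf.expectation (map_pmf blz CR) (\<lambda>bl. Hm bl (n+i))"
    by simp
  also have "map_pmf blz CR = map_pmf (filter Pn) RP" using filter_bagA by (simp add: RP_def)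
  also have "measure_pmf.expectation (map_pmf (filter Pn) RP) (\<lambda>bl. Hm bl (n+i)) = measure_pmf.expectation RP (\<lambda>Ol. Hm (filter Pn Ol) (n+i))"
    by simp
  also have "\<dots> = measure_pmf.expectation RP (\<lambda>Ol. Hm Ol (n+i))"
    by (rule pmf_exp_cong) (rule stepD)
  finally show ?thesis .
qed

definition "gz z = measure Om {\<omega> \<in> space Om. \<alpha> \<le> cs_score fit n m \<gamma> ytr (fst (fst \<omega>)) (snd (fst \<omega>)) (\<lambda>_. z) (snd \<omega>) i k}"

lemma stepB:
  assumes z: "z \<in> set_pmf CR"
  shows "gz z = 1 - Hm (blz z) (n+i)"
proof -
  obtain B tb eb ob where zz: "z = (B,tb,eb,ob)" by (cases z) auto
  have lb: "length (blz z) = B" by (simp add: zz blz_simps)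
  have BB: "B \<le> Bt" using CR_support(1)[OF z] lb by simp
  have vb: "\<And>bg. bg \<in> set (blz z) \<Longrightarrow> valid bg" using CR_support(2)[OF z] valid_bagC by blast
  define Phi where "Phi = (\<lambda>(xx::(nat\<Rightarrow>'x)\<times>(nat\<Rightarrow>'x), sd::nat\<times>nat\<Rightarrow>'s). (mrg xx, \<lambda>b\<in>{..<B}. sd (k,b)))"
  have dist: "distr Om (MM B) Phi = MM B" and Pm: "Phi \<in> measurable Om (MM B)"
    unfolding MM_def Phi_def using Om_transfer[OF BB] by auto
  have FEm0: "FE (blz z) (n+i) \<in> sets (MM (length (blz z)))" by (rule FE_meas[OF vb ni_Aset])
  hence FEm: "FE (blz z) (n+i) \<in> sets (MM B)" using lb by simp
  interpret O: prob_space Om by (rule prob_Om)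
  define E' where "E' = Phi -` FE (blz z) (n+i) \<inter> space Om"
  have E'm: "E' \<in> sets Om" unfolding E'_def by (rule measurable_sets[OF Pm FEm])
  have eqset: "{\<omega> \<in> space Om. \<alpha> \<le> cs_score fit n m \<gamma> ytr (fst (fst \<omega>)) (snd (fst \<omega>)) (\<lambda>_. z) (snd \<omega>) i k}
      = space Om - E'"
  proof (intro set_eqI iffI)
    fix \<omega> assume w: "\<omega> \<in> {\<omega> \<in> space Om. \<alpha> \<le> cs_score fit n m \<gamma> ytr (fst (fst \<omega>)) (snd (fst \<omega>)) (\<lambda>_. z) (snd \<omega>) i k}"
    have mx: "mrg (fst \<omega>) = (\<lambda>j\<in>Tset. if j < n then fst (fst \<omega>) j else snd (fst \<omega>) (j-n))"
      by (simp add: mrg_def case_prod_beta)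
    have "\<not> Fail (blz z) (n+i) (mrg (fst \<omega>)) (\<lambda>b\<in>{..<B}. snd \<omega> (k,b))"
      using w score_Fail[OF z zz, of "\<lambda>_. z" "mrg (fst \<omega>)" "fst (fst \<omega>)" "snd (fst \<omega>)" "snd \<omega>"] mx by simp
    thus "\<omega> \<in> space Om - E'" using w by (auto simp: E'_def Phi_def FE_def split: prod.splits)
  next
    fix \<omega> assume w: "\<omega> \<in> space Om - E'"
    have mx: "mrg (fst \<omega>) = (\<lambda>j\<in>Tset. if j < n then fst (fst \<omega>) j else snd (fst \<omega>) (j-n))"
      by (simp add: mrg_def case_prod_beta)
    have "Phi \<omega> \<in> space (MM B)" using w Pm by (auto simp: measurable_space)
    hence "\<not> Fail (blz z) (n+i) (mrg (fst \<omega>)) (\<lambda>b\<in>{..<B}. snd \<omega> (k,b))"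
      using w lb by (auto simp: E'_def Phi_def FE_def split: prod.splits)
    hence "\<alpha> \<le> cs_score fit n m \<gamma> ytr (fst (fst \<omega>)) (snd (fst \<omega>)) (\<lambda>_. z) (snd \<omega>) i k"
      using score_Fail[OF z zz, of "\<lambda>_. z" "mrg (fst \<omega>)" "fst (fst \<omega>)" "snd (fst \<omega>)" "snd \<omega>"] mx by simp
    thus "\<omega> \<in> {\<omega> \<in> space Om. \<alpha> \<le> cs_score fit n m \<gamma> ytr (fst (fst \<omega>)) (snd (fst \<omega>)) (\<lambda>_. z) (snd \<omega>) i k}"
      using w by simp
  qed
  have "gz z = 1 - measure Om E'" unfolding gz_def eqset by (rule O.prob_compl[OF E'm])
  also have "measure Om E' = measure (distr Om (MM B) Phi) (FE (blz z) (n+i))"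
    unfolding E'_def by (rule measure_distr[OF Pm FEm, symmetric])
  also have "\<dots> = Hm (blz z) (n+i)" by (simp add: dist Hm_def lb)
  finally show ?thesis .
qed

lemma main:
  "measure_pmf.expectation (internal_rand K n m \<gamma> ytr Bt)
     (\<lambda>r. measure Om {\<omega> \<in> space Om. k \<in> cs_set fit K n m \<gamma> \<alpha> ytr (fst (fst \<omega>)) (snd (fst \<omega>)) r (snd \<omega>) i})
   \<ge> 1 - 2 * \<alpha>"
proof -
  have cs_r: "cs_score fit n m \<gamma> ytr xtr xte r sd i k = cs_score fit n m \<gamma> ytr xtr xte (\<lambda>_. r k) sd i k"
    for xtr xte r sd by (simp only: cs_score_def)
  have int: "measure Om {\<omega> \<in> space Om. k \<in> cs_set fit K n m \<gamma> \<alpha> ytr (fst (fst \<omega>)) (snd (fst \<omega>)) r (snd \<omega>) i}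
      = gz (r k)" for r
    unfolding gz_def cs_set_def using k by (simp add: cs_r[of _ _ r])
  have "measure_pmf.expectation (internal_rand K n m \<gamma> ytr Bt)
     (\<lambda>r. measure Om {\<omega> \<in> space Om. k \<in> cs_set fit K n m \<gamma> \<alpha> ytr (fst (fst \<omega>)) (snd (fst \<omega>)) r (snd \<omega>) i})
     = measure_pmf.expectation (map_pmf (\<lambda>r. r k) (internal_rand K n m \<gamma> ytr Bt)) gz"
    by (simp add: int)
  also have "map_pmf (\<lambda>r. r k) (internal_rand K n m \<gamma> ytr Bt) = CR"
    unfolding internal_rand_def CR_def using k by (simp add: Pi_pmf_component)
  also have "measure_pmf.expectation CR gz = measure_pmf.expectation CR (\<lambda>z. 1 - Hm (blz z) (n+i))"
    by (rule pmf_exp_cong) (rule stepB)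
  also have "\<dots> = 1 - measure_pmf.expectation CR (\<lambda>z. Hm (blz z) (n+i))"
    by (subst Bochner_Integration.integral_diff) (auto intro: Hm_integrable simp: measure_pmf.prob_space)
  also have "\<dots> = 1 - measure_pmf.expectation RP (\<lambda>Ol. Hm Ol (n+i))" by (simp add: stepC)
  finally show ?thesis using stepE4 by simp
qed

end

theorem theorem1:
  fixes MX :: "'x measure" and P :: "nat \<Rightarrow> 'x measure" and Q :: "nat \<Rightarrow> 'x measure"
    and S :: "'s measure"
    and fit :: "('x \<times> nat option) multiset \<Rightarrow> 's \<Rightarrow> nat \<Rightarrow> 'x \<Rightarrow> real"
    and K n m Bt :: nat and ytr yte :: "nat \<Rightarrow> nat" and \<alpha> \<gamma> :: real
  assumes "K \<ge> 1"
    and P: "\<And>k. k \<in> {1..K} \<Longrightarrow> prob_space (P k) \<and> sets (P k) = sets MX"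
    and Q: "\<And>i. i < m \<Longrightarrow> yte i \<notin> {1..K} \<Longrightarrow> prob_space (Q i) \<and> sets (Q i) = sets MX"
    and S: "prob_space S"
    and ytr: "\<And>j. j < n \<Longrightarrow> ytr j \<in> {1..K}"
    and fit_meas: "\<And>ls c. (\<lambda>((xs, s), x). fit (mset (map (\<lambda>p. (xs p, ls ! p)) [0..<length ls])) s c x)
                       \<in> borel_measurable ((PiM {..<length ls} (\<lambda>_. MX) \<Otimes>\<^sub>M S) \<Otimes>\<^sub>M MX)"
    and "0 < \<alpha>" "\<alpha> < 1" "\<gamma> \<ge> 0" "Bt \<ge> 1"
    and i: "i < m" and k: "k \<in> {1..K}" and "yte i = k"
  shows
    "(let \<Omega> = (PiM {..<n} (\<lambda>j. P (ytr j))
               \<Otimes>\<^sub>M PiM {..<m} (\<lambda>i'. if yte i' \<in> {1..K} then P (yte i') else Q i'))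
               \<Otimes>\<^sub>M PiM ({1..K} \<times> {..<Bt}) (\<lambda>_. S)
      in measure_pmf.expectation (internal_rand K n m \<gamma> ytr Bt)
           (\<lambda>r. measure \<Omega> {\<omega> \<in> space \<Omega>.
                 k \<in> cs_set fit K n m \<gamma> \<alpha> ytr (fst (fst \<omega>)) (snd (fst \<omega>)) r (snd \<omega>) i}))
     \<ge> 1 - 2 * \<alpha>"
proof -
  interpret csf MX P Q S fit K n m Bt ytr yte \<alpha> \<gamma> i k
    by (rule csf.intro) (fact assms)+
  have Om: "Om = (PiM {..<n} (\<lambda>j. P (ytr j))
               \<Otimes>\<^sub>M PiM {..<m} (\<lambda>i'. if yte i' \<in> {1..K} then P (yte i') else Q i'))
               \<Otimes>\<^sub>M PiM ({1..K} \<times> {..<Bt}) (\<lambda>_. S)"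
    unfolding Om_def Xtr_def Xte_def SeedPi_def Rte_def[abs_def] ..
  show ?thesis unfolding Let_def Om[symmetric] by (rule main)
qed

end
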